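(* Let $p,q,r\in(0,\infty)$. For every $\omega$-measurable function $f$ on $X=\mathbb R\times(0,\infty)\times\mathbb R$, locally in $L^r(X,\omega)$ and supported in $X_J=(-2^JJ,2^JJ]\times(2^{-J},2^J]\times(-2^JJ,2^JJ]$ for some $J\in\mathbb N$, the function $F(f,r)$ on $X'=\mathbb Z^3$ defined by $F(f,r)(m,l,n)=\|f1_{H(m,l,n)}\|_{L^r(X,\omega)}$ satisfies $$\|f\|_{L^q_\nu(\ell^r_\omega)}=\|F(f,r)\|_{L^q_{\nu'}(\ell^r_{\omega'})},\qquad \|f\|_{L^p_\mu(\ell^q_\nu(\ell^r_\omega))}=\|F(f,r)\|_{L^p_{\mu'}(\ell^q_{\nu'}(\ell^r_{\omega'}))}.$$
   Context: Continuous setting: $\omega$ Lebesgue measure on $X$. Dyadic intervals $I(m,l)=(2^lm,2^l(m+1)]$; tiles $H(m,l,n)=I(m,l)\times(2^{l-1},2^l]\times I(n,-l)$. Strips $D(m,l)=I(m,l)\times(0,2^l]\times\mathbb R$ form $\mathcal D$, $\sigma(D(m,l))=2^l$. Trees $T(m,l,n)=\bigcup_{l'\le l}\bigcup_{m':\,I(m',l')\subseteq I(m,l)}H(m',l',N(n,l'))$, where $N(n,l')$ is the integer with $I(n,-l)\subseteq I(N(n,l'),-l')$, form $\mathcal T$, $\tau(T(m,l,n))=2^l$. $\mu(A)=\inf\{\sum_{S\in\mathcal S'}\sigma(S):\mathcal S'\subseteq\mathcal D,A\subseteq\bigcup\mathcal S'\}$, $\nu$ likewise from $(\mathcal T,\tau)$.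 Quasi-norms on $X$ (for measurable $f$): $\ell^r_\omega(f)(T)=\nu(T)^{-1/r}\|f1_T\|_{L^r(\omega)}$, $T\in\mathcal T$; $\|f\|_{L^\infty_\nu(\ell^r_\omega)}=\sup_{T\in\mathcal T}\ell^r_\omega(f)(T)$; $\nu(\ell^r_\omega(f)>\lambda)=\inf\{\nu(B):B\text{ measurable},\|f1_{X\setminus B}\|_{L^\infty_\nu(\ell^r_\omega)}\le\lambda\}$; $\|f\|_{L^q_\nu(\ell^r_\omega)}=(\int_0^\infty q\lambda^{q-1}\nu(\ell^r_\omega(f)>\lambda)d\lambda)^{1/q}$; $\ell^q_\nu(\ell^r_\omega)(f)(D)=\mu(D)^{-1/q}\|f1_D\|_{L^q_\nu(\ell^r_\omega)}$, $D\in\mathcal D$; $\|f\|_{L^\infty_\mu(\ell^q_\nu(\ell^r_\omega))}=\sup_{D\in\mathcal D}$; $\mu(\ell^q_\nu(\ell^r_\omega)(f)>\lambda)=\inf\{\mu(B):\|f1_{X\setminus B}\|_{L^\infty_\mu(\ell^q_\nu(\ell^r_\omega))}\le\lambda\}$; $\|f\|_{L^p_\mu(\ell^q_\nu(\ell^r_\omega))}=(\int_0^\infty p\lambda^{p-1}\mu(\cdots>\lambda)d\lambda)^{1/p}$. Discrete setting: $X'=\mathbb Z^3$, $\omega'$ the counting measure. $D'(m,l)=\{(m',l',n'):l'\le l,\ m'\in[2^{l-l'}m,2^{l-l'}(m+1)),\ n'\in\mathbb Z\}$ with $\sigma'(D'(m,l))=2^l$; $T'(m,l,n)=\{(m',l',n'):l'\le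 l,\ m'\in[2^{l-l'}m,2^{l-l'}(m+1)),\ n'=N(n,l')\}$ with $\tau'(T'(m,l,n))=2^l$; $\mu',\nu'$ are the covering outer measures $\mu'(A)=\inf\{\sum\sigma'(S):A\subseteq\bigcup S\}$, $\nu'(A)=\inf\{\sum\tau'(S):A\subseteq\bigcup S\}$ over subcollections of these sets. Quasi-norms on $X'$ are defined as on $X$ but with suprema over all nonempty subsets $A\subseteq X'$: $\ell^r_{\omega'}(F)(A)=\nu'(A)^{-1/r}\|F1_A\|_{L^r(X',\omega')}$, $\|F\|_{L^\infty_{\nu'}(\ell^r_{\omega'})}=\sup_{A\ne\varnothing}\ell^r_{\omega'}(F)(A)$, $\nu'(\ell^r_{\omega'}(F)>\lambda)=\inf\{\nu'(B):\|F1_{X'\setminus B}\|_{L^\infty_{\nu'}(\ell^r_{\omega'})}\le\lambda\}$, $L^q_{\nu'}(\ell^r_{\omega'})$ by the same integral formula, and analogously $\ell^q_{\nu'}(\ell^r_{\omega'})(F)(A)=\mu'(A)^{-1/q}\|F1_A\|_{L^q_{\nu'}(\ell^r_{\omega'})}$ and $L^p_{\mu'}(\ell^q_{\nu'}(\ell^r_{\omega'}))$. *)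

theory Defs
  imports "HOL-Analysis.Analysis"
begin

definition epow :: "ennreal \<Rightarrow> real \<Rightarrow> ennreal" where
  "epow x a =
     (if a = 0 then 1
      else if x = top then (if a > 0 then top else 0)
      else if x = 0 then (if a > 0 then 0 else top)
      else ennreal (enn2real x powr a))"

definition Lnorm :: "'a measure \<Rightarrow> real \<Rightarrow> ('a \<Rightarrow> real) \<Rightarrow> ennreal" where
  "Lnorm M r g = epow (\<integral>\<^sup>+ x. ennreal (\<bar>g x\<bar> powr r) \<partial>M) (1 / r)"

definition sup_size ::
  "real \<Rightarrow> 'a set set \<Rightarrow> ('a set \<Rightarrow> ennreal) \<Rightarrow> (('a \<Rightarrow> real) \<Rightarrow> ennreal) \<Rightarrow> ('a \<Rightarrow> real) \<Rightarrow> ennreal"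
  where
  "sup_size s Tests nu N g = (SUP T\<in>Tests. epow (nu T) (- 1 / s) * N (\<lambda>x. indicator T x * g x))"

definition level_meas ::
  "'a set \<Rightarrow> 'a set set \<Rightarrow> ('a set \<Rightarrow> ennreal) \<Rightarrow> (('a \<Rightarrow> real) \<Rightarrow> ennreal) \<Rightarrow> ('a \<Rightarrow> real) \<Rightarrow> real \<Rightarrow> ennreal"
  where
  "level_meas Xs Bs nu S g lam =
     (INF B\<in>{B. B \<in> Bs \<and> S (\<lambda>x. indicator (Xs - B) x * g x) \<le> ennreal lam}. nu B)"

definition Lq_of_dist :: "real \<Rightarrow> (real \<Rightarrow> ennreal) \<Rightarrow> ennreal" where
  "Lq_of_dist q d =
     epow (\<integral>\<^sup>+ t. ennreal (q * t powr (q - 1)) * d t * indicator {0<..} t \<partial>lborel) (1 / q)"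

type_synonym pt = "real \<times> real \<times> real"

definition Xsp :: "pt set" where
  "Xsp = UNIV \<times> {0<..} \<times> UNIV"

definition dyI :: "int \<Rightarrow> int \<Rightarrow> real set" where
  "dyI m l = {2 powi l * of_int m <.. 2 powi l * (of_int m + 1)}"

definition tile :: "int \<Rightarrow> int \<Rightarrow> int \<Rightarrow> pt set" where
  "tile m l n = dyI m l \<times> {2 powi (l - 1) <.. 2 powi l} \<times> dyI n (- l)"

definition strip :: "int \<Rightarrow> int \<Rightarrow> pt set" where
  "strip m l = dyI m l \<times> {0 <.. 2 powi l} \<times> UNIV"

definition Nidx :: "int \<Rightarrow> int \<Rightarrow> int \<Rightarrow> int" where
  "Nidx n l l' = (THE N. dyI n (- l) \<subseteq> dyI N (- l'))"

definition tree :: "int \<Rightarrow> int \<Rightarrow> int \<Rightarrow> pt set" where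
  "tree m l n = (\<Union>l'\<in>{..l}. \<Union>m'\<in>{m'. dyI m' l' \<subseteq> dyI m l}. tile m' l' (Nidx n l l'))"

text \<open>Covering outer measures; a subcollection of strips/trees is indexed by its set of
  parameters (distinct parameters give distinct sets).\<close>
definition mu :: "pt set \<Rightarrow> ennreal" where
  "mu A = (INF K\<in>{K. A \<subseteq> (\<Union>(m, l)\<in>K. strip m l)}.
             \<integral>\<^sup>+ k. ennreal (2 powi snd k) \<partial>count_space K)"

definition nu :: "pt set \<Rightarrow> ennreal" where
  "nu A = (INF K\<in>{K. A \<subseteq> (\<Union>(m, l, n)\<in>K. tree m l n)}.
             \<integral>\<^sup>+ k. ennreal (2 powi fst (snd k)) \<partial>count_space K)"

definition Strips :: "pt set set" where
  "Strips = (\<lambda>(m, l). strip m l) ` UNIV"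

definition Trees :: "pt set set" where
  "Trees = (\<lambda>(m, l, n). tree m l n) ` UNIV"

text \<open>Admissible exceptional sets: omega-measurable subsets of X.\<close>
definition Bmeas :: "pt set set" where
  "Bmeas = {B. B \<in> sets lebesgue \<and> B \<subseteq> Xsp}"

definition Linf_nu :: "real \<Rightarrow> (pt \<Rightarrow> real) \<Rightarrow> ennreal" where
  "Linf_nu r g = sup_size r Trees nu (Lnorm lebesgue r) g"

definition Lq_nu :: "real \<Rightarrow> real \<Rightarrow> (pt \<Rightarrow> real) \<Rightarrow> ennreal" where
  "Lq_nu q r g = Lq_of_dist q (level_meas Xsp Bmeas nu (Linf_nu r) g)"

definition Linf_mu :: "real \<Rightarrow> real \<Rightarrow> (pt \<Rightarrow> real) \<Rightarrow> ennreal" where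
  "Linf_mu q r g = sup_size q Strips mu (Lq_nu q r) g"

definition Lp_mu :: "real \<Rightarrow> real \<Rightarrow> real \<Rightarrow> (pt \<Rightarrow> real) \<Rightarrow> ennreal" where
  "Lp_mu p q r g = Lq_of_dist p (level_meas Xsp Bmeas mu (Linf_mu q r) g)"

definition XJ :: "nat \<Rightarrow> pt set" where
  "XJ J = {- (2 ^ J * real J) <.. 2 ^ J * real J} \<times> {2 powi (- int J) <.. 2 ^ J}
          \<times> {- (2 ^ J * real J) <.. 2 ^ J * real J}"

type_synonym dpt = "int \<times> int \<times> int"

definition dstrip :: "int \<Rightarrow> int \<Rightarrow> dpt set" where
  "dstrip m l = {(m', l', n'). l' \<le> l \<and> 2 ^ nat (l - l') * m \<le> m' \<and> m' < 2 ^ nat (l - l') * (m + 1)}"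

definition dtree :: "int \<Rightarrow> int \<Rightarrow> int \<Rightarrow> dpt set" where
  "dtree m l n = {(m', l', n'). l' \<le> l \<and> 2 ^ nat (l - l') * m \<le> m' \<and> m' < 2 ^ nat (l - l') * (m + 1)
                    \<and> n' = Nidx n l l'}"

definition dmu :: "dpt set \<Rightarrow> ennreal" where
  "dmu A = (INF K\<in>{K. A \<subseteq> (\<Union>(m, l)\<in>K. dstrip m l)}.
             \<integral>\<^sup>+ k. ennreal (2 powi snd k) \<partial>count_space K)"

definition dnu :: "dpt set \<Rightarrow> ennreal" where
  "dnu A = (INF K\<in>{K. A \<subseteq> (\<Union>(m, l, n)\<in>K. dtree m l n)}.
             \<integral>\<^sup>+ k. ennreal (2 powi fst (snd k)) \<partial>count_space K)"

definition dLinf_nu :: "real \<Rightarrow> (dpt \<Rightarrow> real) \<Rightarrow> ennreal" where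
  "dLinf_nu r G = sup_size r {A. A \<noteq> {}} dnu (Lnorm (count_space UNIV) r) G"

definition dLq_nu :: "real \<Rightarrow> real \<Rightarrow> (dpt \<Rightarrow> real) \<Rightarrow> ennreal" where
  "dLq_nu q r G = Lq_of_dist q (level_meas UNIV UNIV dnu (dLinf_nu r) G)"

definition dLinf_mu :: "real \<Rightarrow> real \<Rightarrow> (dpt \<Rightarrow> real) \<Rightarrow> ennreal" where
  "dLinf_mu q r G = sup_size q {A. A \<noteq> {}} dmu (dLq_nu q r) G"

definition dLp_mu :: "real \<Rightarrow> real \<Rightarrow> real \<Rightarrow> (dpt \<Rightarrow> real) \<Rightarrow> ennreal" where
  "dLp_mu p q r G = Lq_of_dist p (level_meas UNIV UNIV dmu (dLinf_mu q r) G)"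

text \<open>F(f,r)(m,l,n) = || f 1_{H(m,l,n)} ||_{L^r(omega)} (finite under the hypotheses).\<close>
definition Fdisc :: "(pt \<Rightarrow> real) \<Rightarrow> real \<Rightarrow> dpt \<Rightarrow> real" where
  "Fdisc f r = (\<lambda>(m, l, n). enn2real (Lnorm lebesgue r (\<lambda>x. indicator (tile m l n) x * f x)))"

end

theory Submission
  imports Defs
begin


definition di :: "int \<Rightarrow> real \<Rightarrow> int" where
  "di l x = \<lceil>x / 2 powi l\<rceil> - 1"

lemma powi_pos[simp]: "(0::real) < 2 powi l"
  by simp

lemma mem_dyI: "x \<in> dyI m l \<longleftrightarrow> di l x = m"
proof -
  have p: "(0::real) < 2 powi l" by simp
  have "x \<in> dyI m l \<longleftrightarrow> of_int m < x / 2 powi l \<and> x / 2 powi l \<le> of_int m + 1"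
    unfolding dyI_def using p by (auto simp: field_simps)
  also have "\<dots> \<longleftrightarrow> \<lceil>x / 2 powi l\<rceil> = m + 1"
    by (simp add: ceiling_eq_iff)
  finally show ?thesis unfolding di_def by linarith
qed

lemma powi_split: "l' \<le> l \<Longrightarrow> (2::real) powi l = 2 powi l' * 2 ^ nat (l - l')"
proof -
  assume "l' \<le> l"
  then have "l = l' + int (nat (l - l'))" by simp
  then have "(2::real) powi l = 2 powi (l' + int (nat (l - l')))" by simp
  also have "\<dots> = 2 powi l' * 2 powi (int (nat (l - l')))"
    by (simp add: power_int_add)
  also have "\<dots> = 2 powi l' * 2 ^ nat (l - l')" by (simp add: power_int_def)
  finally show ?thesis .
qed

lemma di_nest:
  assumes "l' \<le> l"
  shows "di l x = di l' x div 2 ^ nat (l - l')"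
proof -
  define k where "k = nat (l - l')"
  define a where "a = di l' x"
  define M where "M = a div 2 ^ k"
  have kp: "(0::int) < 2 ^ k" by simp
  have y: "of_int a < x / 2 powi l'" "x / 2 powi l' \<le> of_int a + 1"
    using mem_dyI[of x a l'] unfolding a_def dyI_def
    by (auto simp: field_simps)
  have dm: "2 ^ k * M = a - a mod 2 ^ k" unfolding M_def
    by (simp add: minus_mod_eq_mult_div)
  have c1: "0 \<le> a mod 2 ^ k" "a mod 2 ^ k < 2 ^ k" using kp by auto
  have m1: "2 ^ k * M \<le> a" using dm c1 by linarith
  have "2 ^ k * (M + 1) = 2 ^ k * M + 2 ^ k" by (simp add: distrib_left)
  then have m2: "a + 1 \<le> 2 ^ k * (M + 1)" using dm c1 by linarith
  have e: "x / 2 powi l = (x / 2 powi l') / 2 ^ k"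
    using powi_split[OF assms] k_def by simp
  have r1: "real_of_int (2^k * M) \<le> of_int a" using m1 by linarith
  have r2: "real_of_int a + 1 \<le> of_int (2^k * (M+1))" using m2 by linarith
  have "of_int M < x / 2 powi l"
  proof -
    have "of_int (2^k * M) < x / 2 powi l'" using r1 y(1) by linarith
    then have "2^k * of_int M < x / 2 powi l'" by simp
    then show ?thesis unfolding e by (simp add: field_simps)
  qed
  moreover have "x / 2 powi l \<le> of_int M + 1"
  proof -
    have "x / 2 powi l' \<le> of_int (2^k * (M+1))" using r2 y(2) by linarith
    then have "x / 2 powi l' \<le> 2^k * (of_int M + 1)" by simp
    then show ?thesis unfolding e by (simp add: field_simps)
  qed
  ultimately have "x \<in> dyI M l" unfolding dyI_def by (auto simp: field_simps)
  then show ?thesis using mem_dyI unfolding M_def a_def k_def by blast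
qed

lemma div_iff: "(0::int) < d \<Longrightarrow> (d * m \<le> x \<and> x < d * (m + 1)) \<longleftrightarrow> x div d = m"
  by (smt (verit, del_insts) minus_mod_eq_mult_div
    nonzero_mult_div_cancel_left pos_mod_sign zdiv_mono1)

lemma div_div_pow: "(x::int) div 2 ^ a div 2 ^ b = x div 2 ^ (a + b)"
  by (simp add: power_add zdiv_zmult2_eq)

definition lv :: "real \<Rightarrow> int" where "lv s = \<lceil>log 2 s\<rceil>"

lemma powi_powr: "(2::real) powi l = 2 powr (of_int l)"
  by (simp add: powr_real_of_int')

lemma mem_lvl:
  assumes "0 < s"
  shows "s \<in> {2 powi (l - 1) <.. 2 powi l} \<longleftrightarrow> lv s = l"
proof -
  have "lv s = l \<longleftrightarrow> of_int l - 1 < log 2 s \<and> log 2 s \<le> of_int l"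
    unfolding lv_def by (simp add: ceiling_eq_iff)
  also have "\<dots> \<longleftrightarrow> 2 powr (of_int (l - 1)) < s \<and> s \<le> 2 powr (of_int l)"
    using assms by (simp add: less_log_iff log_le_iff)
  finally show ?thesis by (simp add: powi_powr)
qed

lemma lv_le: "0 < s \<Longrightarrow> lv s \<le> l \<longleftrightarrow> s \<le> 2 powi l"
  unfolding lv_def by (simp add: ceiling_le_iff log_le_iff powi_powr)

definition idx :: "pt \<Rightarrow> dpt" where
  "idx p = (di (lv (fst (snd p))) (fst p), lv (fst (snd p)), di (- lv (fst (snd p))) (snd (snd p)))"

lemma mem_Xsp: "p \<in> Xsp \<longleftrightarrow> 0 < fst (snd p)"
  unfolding Xsp_def by (cases p) auto

lemma mem_tile: "p \<in> tile m l n \<longleftrightarrow> p \<in> Xsp \<and> idx p = (m, l, n)"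
proof -
  obtain x s y where p: "p = (x, s, y)" by (cases p) auto
  have "p \<in> tile m l n \<longleftrightarrow> di l x = m \<and> s \<in> {2 powi (l - 1) <.. 2 powi l} \<and> di (- l) y = n"
    unfolding tile_def p by (simp add: mem_dyI)
  also have "\<dots> \<longleftrightarrow> 0 < s \<and> di l x = m \<and> lv s = l \<and> di (- l) y = n"
  proof -
    have "s \<in> {2 powi (l - 1) <.. 2 powi l} \<Longrightarrow> 0 < s"
    proof -
      assume "s \<in> {2 powi (l - 1) <.. 2 powi l}"
      then have "2 powi (l - 1) < s" by simp
      moreover have "(0::real) < 2 powi (l - 1)" by (rule powi_pos)
      ultimately show "0 < s" by linarith
    qed
    then show ?thesis using mem_lvl[of s l] by auto
  qed
  also have "\<dots> \<longleftrightarrow> p \<in> Xsp \<and> idx p = (m, l, n)"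
    unfolding idx_def p mem_Xsp by auto
  finally show ?thesis .
qed

lemma dyI_point: "2 powi l * (of_int m + 1) \<in> dyI m l"
  unfolding dyI_def by simp

lemma dyI_sub:
  assumes "l' \<le> l"
  shows "dyI m' l' \<subseteq> dyI m l \<longleftrightarrow> m' div 2 ^ nat (l - l') = m"
proof
  assume "dyI m' l' \<subseteq> dyI m l"
  then have "2 powi l' * (of_int m' + 1) \<in> dyI m l" using dyI_point by blast
  then show "m' div 2 ^ nat (l - l') = m"
    using dyI_point[of l' m'] by (simp add: mem_dyI di_nest[OF assms])
next
  assume "m' div 2 ^ nat (l - l') = m"
  then show "dyI m' l' \<subseteq> dyI m l"
    by (auto simp: mem_dyI di_nest[OF assms])
qed

lemma Nidx_eq:
  assumes "l' \<le> l"
  shows "Nidx n l l' = n div 2 ^ nat (l - l')"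
proof -
  have a: "- l \<le> - l'" using assms by simp
  have e: "nat (- l' - - l) = nat (l - l')" by simp
  show ?thesis unfolding Nidx_def
  proof (rule the_equality)
    show "dyI n (- l) \<subseteq> dyI (n div 2 ^ nat (l - l')) (- l')"
      using dyI_sub[OF a, of n] e by simp
  next
    fix N assume "dyI n (- l) \<subseteq> dyI N (- l')"
    then show "N = n div 2 ^ nat (l - l')"
      using dyI_sub[OF a, of n N] e by simp
  qed
qed

lemma dtree_eq:
  "dtree m l n = {(m', l', n'). l' \<le> l \<and> m' div 2 ^ nat (l - l') = m \<and> n' = n div 2 ^ nat (l - l')}"
  unfolding dtree_def using div_iff[of "2 ^ nat (l - _)"] Nidx_eq
  by (auto simp: mult.commute)

lemma dstrip_eq:
  "dstrip m l = {(m', l', n'). l' \<le> l \<and> m' div 2 ^ nat (l - l') = m}"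
  unfolding dstrip_def using div_iff[of "2 ^ nat (l - _)"]
  by (auto simp: mult.commute)

lemma tree_eq: "tree m l n = {p \<in> Xsp. idx p \<in> dtree m l n}"
proof -
  have "p \<in> tree m l n \<longleftrightarrow> p \<in> Xsp \<and> idx p \<in> dtree m l n" for p
  proof -
    obtain a b c where i: "idx p = (a, b, c)" by (cases "idx p") auto
    have "p \<in> tree m l n \<longleftrightarrow> (\<exists>l'\<le>l. \<exists>m'. dyI m' l' \<subseteq> dyI m l \<and> p \<in> tile m' l' (Nidx n l l'))"
      unfolding tree_def by auto
    also have "\<dots> \<longleftrightarrow> (\<exists>l'\<le>l. \<exists>m'. m' div 2 ^ nat (l - l') = m \<and> p \<in> Xsp \<and> idx p = (m', l', n div 2 ^ nat (l - l')))"
      by (auto simp: dyI_sub Nidx_eq mem_tile)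
    also have "\<dots> \<longleftrightarrow> p \<in> Xsp \<and> idx p \<in> dtree m l n"
      unfolding dtree_eq i by auto
    finally show ?thesis .
  qed
  then show ?thesis by auto
qed

lemma strip_eq: "strip m l = {p \<in> Xsp. idx p \<in> dstrip m l}"
proof -
  have "p \<in> strip m l \<longleftrightarrow> p \<in> Xsp \<and> idx p \<in> dstrip m l" for p
  proof -
    obtain x s y where p: "p = (x, s, y)" by (cases p) auto
    have "p \<in> strip m l \<longleftrightarrow> di l x = m \<and> 0 < s \<and> s \<le> 2 powi l"
      unfolding strip_def p by (simp add: mem_dyI)
    also have "\<dots> \<longleftrightarrow> 0 < s \<and> lv s \<le> l \<and> di (lv s) x div 2 ^ nat (l - lv s) = m"
      using lv_le[of s l] di_nest[of "lv s" l x] by auto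
    also have "\<dots> \<longleftrightarrow> p \<in> Xsp \<and> idx p \<in> dstrip m l"
      unfolding dstrip_eq p idx_def mem_Xsp by auto
    finally show ?thesis .
  qed
  then show ?thesis by auto
qed

definition pt_of :: "dpt \<Rightarrow> pt" where
  "pt_of k = (case k of (m, l, n) \<Rightarrow> (2 powi l * (of_int m + 1), 2 powi l, 2 powi (- l) * (of_int n + 1)))"

lemma pt_of_tile: "pt_of (m, l, n) \<in> tile m l n"
  unfolding pt_of_def tile_def using dyI_point
  by (auto simp: power_int_diff)

lemma pt_of: "pt_of k \<in> Xsp" "idx (pt_of k) = k"
  using pt_of_tile[of "fst k" "fst (snd k)" "snd (snd k)"] by (auto simp: mem_tile)

lemma idx_image: "idx ` {p \<in> Xsp. idx p \<in> S} = S"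
  using pt_of by (auto intro!: image_eqI[of _ idx "pt_of _"])


lemma epow_pos_top: "0 < a \<Longrightarrow> epow top a = top"
  unfolding epow_def by simp
lemma epow_pos_zero: "0 < a \<Longrightarrow> epow 0 a = 0"
  unfolding epow_def by simp
lemma epow_real: "0 < x \<Longrightarrow> epow (ennreal x) a = ennreal (x powr a)"
  unfolding epow_def by auto
lemma epow_mono:
  assumes "0 < a" "x \<le> y"
  shows "epow x a \<le> epow y a"
proof (cases "x = 0")
  case True then show ?thesis using assms by (simp add: epow_pos_zero)
next
  case False
  show ?thesis
  proof (cases "y = top")
    case True then show ?thesis using assms by (simp add: epow_pos_top)
  next
    case yt: False
    then obtain x' y' where "x = ennreal x'" "y = ennreal y'" "0 < x'" "x' \<le> y'"
      using False assms(2)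
      by (metis ennreal_cases ennreal_le_iff2 ennreal_zero_less_top le_less_trans top.not_eq_extremum
          ennreal_less_zero_iff ennreal_zero_less_top not_gr_zero not_le order.strict_iff_not)
    then show ?thesis using assms by (simp add: epow_real powr_mono2)
  qed
qed

definition tileK :: "dpt \<Rightarrow> pt set" where
  "tileK k = (case k of (m, l, n) \<Rightarrow> tile m l n)"

lemma mem_tileK: "p \<in> tileK k \<longleftrightarrow> p \<in> Xsp \<and> idx p = k"
  unfolding tileK_def by (cases k) (auto simp: mem_tile)

definition preim :: "dpt set \<Rightarrow> pt set" where
  "preim S = {p \<in> Xsp. idx p \<in> S}"

lemma preim_UN: "preim S = (\<Union>k\<in>S. tileK k)"
  unfolding preim_def by (auto simp: mem_tileK)

lemma tile_meas: "tile m l n \<in> sets lebesgue"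
proof -
  have "tile m l n \<in> sets borel"
    unfolding tile_def dyI_def by (intro borel_Times) auto
  then show ?thesis by simp
qed

lemma tileK_meas[measurable]: "tileK k \<in> sets lebesgue"
  unfolding tileK_def by (cases k) (simp add: tile_meas)

lemma preim_meas[measurable]: "preim S \<in> sets lebesgue"
  unfolding preim_UN by (intro sets.countable_UN') (auto intro: countableI_type)

lemma Xsp_meas[measurable]: "Xsp \<in> sets lebesgue"
proof -
  have "Xsp \<in> sets borel" unfolding Xsp_def by (intro borel_Times) auto
  then show ?thesis by simp
qed

definition Ec :: "real \<Rightarrow> (pt \<Rightarrow> real) \<Rightarrow> dpt \<Rightarrow> ennreal" where
  "Ec r g k = (\<integral>\<^sup>+x. ennreal (\<bar>g x\<bar> powr r) * indicator (tileK k) x \<partial>lebesgue)"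

definition Ed :: "real \<Rightarrow> (dpt \<Rightarrow> real) \<Rightarrow> dpt set \<Rightarrow> ennreal" where
  "Ed r G A = (\<integral>\<^sup>+k. ennreal (\<bar>G k\<bar> powr r) * indicator A k \<partial>count_space UNIV)"

definition good :: "real \<Rightarrow> (pt \<Rightarrow> real) \<Rightarrow> bool" where
  "good r g \<longleftrightarrow> g \<in> borel_measurable lebesgue \<and> (\<forall>x. x \<notin> Xsp \<longrightarrow> g x = 0)
      \<and> (\<integral>\<^sup>+x. ennreal (\<bar>g x\<bar> powr r) \<partial>lebesgue) < \<infinity>"

lemma abs_ind_powr: "\<bar>indicator A x * (g x::real)\<bar> powr r = indicator A x * \<bar>g x\<bar> powr r"
  by (cases "x \<in> A") auto

lemma ennreal_ind_mult: "ennreal (indicator A x * (y::real)) = indicator A x * ennreal y"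
  by (simp add: indicator_def)

lemma good_ind:
  assumes "good r g" "Y \<in> sets lebesgue"
  shows "good r (\<lambda>x. indicator Y x * g x)"
proof -
  have "(\<integral>\<^sup>+x. ennreal (\<bar>indicator Y x * g x\<bar> powr r) \<partial>lebesgue) \<le> (\<integral>\<^sup>+x. ennreal (\<bar>g x\<bar> powr r) \<partial>lebesgue)"
    by (intro nn_integral_mono) (simp add: indicator_def)
  then show ?thesis using assms unfolding good_def
    by (auto intro!: borel_measurable_times borel_measurable_indicator)
qed

lemma Ec_fin: "good r g \<Longrightarrow> Ec r g k < \<infinity>"
proof -
  assume g: "good r g"
  have "Ec r g k \<le> (\<integral>\<^sup>+x. ennreal (\<bar>g x\<bar> powr r) \<partial>lebesgue)"
    unfolding Ec_def by (intro nn_integral_mono) (simp add: indicator_def)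
  then show ?thesis using g unfolding good_def by auto
qed

lemma Fdisc_alt: "Fdisc g r k = enn2real (Lnorm lebesgue r (\<lambda>x. indicator (tileK k) x * g x))"
  unfolding Fdisc_def tileK_def by (cases k) auto

lemma Lnorm_tile: "Lnorm lebesgue r (\<lambda>x. indicator (tileK k) x * g x) = epow (Ec r g k) (1 / r)"
  unfolding Lnorm_def Ec_def abs_ind_powr ennreal_ind_mult by (simp add: mult.commute)

lemma epow_inv:
  assumes "0 < r" "x < \<infinity>"
  shows "ennreal (enn2real (epow x (1 / r)) powr r) = x"
proof (cases "x = 0")
  case True then show ?thesis using assms by (simp add: epow_pos_zero)
next
  case False
  then obtain x' where x: "x = ennreal x'" "0 < x'" using assms
    by (metis ennreal_cases ennreal_less_zero_iff infinity_ennreal_def less_ennreal.rep_eq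
          not_gr_zero top.not_eq_extremum)
  then show ?thesis using assms
    by (simp add: epow_real powr_powr)
qed

lemma Fdisc_val:
  assumes "good r g" "0 < r"
  shows "ennreal (\<bar>Fdisc g r k\<bar> powr r) = Ec r g k"
proof -
  have "\<bar>Fdisc g r k\<bar> = Fdisc g r k" by (simp add: Fdisc_alt)
  then show ?thesis using epow_inv[OF assms(2) Ec_fin[OF assms(1)]]
    by (simp add: Fdisc_alt Lnorm_tile)
qed

lemma Fdisc_ind:
  assumes "good r g" "0 < r"
  shows "Fdisc (\<lambda>x. indicator (preim S) x * g x) r = (\<lambda>k. indicator S k * Fdisc g r k)"
proof
  fix k
  show "Fdisc (\<lambda>x. indicator (preim S) x * g x) r k = indicator S k * Fdisc g r k"
  proof (cases "k \<in> S")
    case True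
    then have "(\<lambda>x. indicator (tileK k) x * (indicator (preim S) x * g x)) = (\<lambda>x. indicator (tileK k) x * g x)"
      by (auto simp: indicator_def preim_def mem_tileK)
    then show ?thesis using True by (simp add: Fdisc_alt)
  next
    case False
    then have "(\<lambda>x. indicator (tileK k) x * (indicator (preim S) x * g x)) = (\<lambda>x. 0)"
      by (auto simp: indicator_def preim_def mem_tileK)
    then show ?thesis using False assms(2) by (simp add: Fdisc_alt Lnorm_def epow_pos_zero)
  qed
qed

lemma countable_dpt[simp]: "countable (A :: dpt set)"
  by (rule countableI_type)

lemma int_preim:
  assumes g: "good r g" and r: "0 < r"
  shows "(\<integral>\<^sup>+x. ennreal (\<bar>indicator (preim S) x * g x\<bar> powr r) \<partial>lebesgue) = Ed r (Fdisc g r) S"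
proof -
  have gm[measurable]: "g \<in> borel_measurable lebesgue" using g unfolding good_def by auto
  have pw: "ennreal (\<bar>indicator (preim S) x * g x\<bar> powr r)
      = (\<integral>\<^sup>+k. indicator S k * (ennreal (\<bar>g x\<bar> powr r) * indicator (tileK k) x) \<partial>count_space UNIV)" for x
  proof (cases "x \<in> Xsp")
    case True
    have "(\<integral>\<^sup>+k. indicator S k * (ennreal (\<bar>g x\<bar> powr r) * indicator (tileK k) x) \<partial>count_space UNIV)
        = (\<Sum>k\<in>{idx x}. indicator S k * (ennreal (\<bar>g x\<bar> powr r) * indicator (tileK k) x))"
      by (rule nn_integral_count_space') (auto simp: mem_tileK)
    then show ?thesis using True
      by (simp add: abs_ind_powr ennreal_ind_mult preim_def mem_tileK indicator_def)
  next
    case False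
    then have "g x = 0" using g unfolding good_def by blast
    then show ?thesis using r by simp
  qed
  have "(\<integral>\<^sup>+x. ennreal (\<bar>indicator (preim S) x * g x\<bar> powr r) \<partial>lebesgue)
      = (\<integral>\<^sup>+x. (\<integral>\<^sup>+k. indicator S k * (ennreal (\<bar>g x\<bar> powr r) * indicator (tileK k) x) \<partial>count_space UNIV) \<partial>lebesgue)"
    by (simp add: pw)
  also have "\<dots> = (\<integral>\<^sup>+k. (\<integral>\<^sup>+x. indicator S k * (ennreal (\<bar>g x\<bar> powr r) * indicator (tileK k) x) \<partial>lebesgue) \<partial>count_space UNIV)"
    by (rule nn_integral_count_space_nn_integral) auto
  also have "\<dots> = (\<integral>\<^sup>+k. indicator S k * Ec r g k \<partial>count_space UNIV)"
    unfolding Ec_def by (subst nn_integral_cmult) auto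
  also have "\<dots> = Ed r (Fdisc g r) S"
    unfolding Ed_def Fdisc_val[OF g r] by (simp add: mult.commute)
  finally show ?thesis .
qed


lemma powr_inv_le:
  assumes s: "0 < s" and x: "0 < x" and S: "0 < (S::real)"
  shows "x powr (1 / s) \<le> S \<longleftrightarrow> x \<le> S powr s"
proof
  assume h: "x powr (1 / s) \<le> S"
  have "(x powr (1 / s)) powr s \<le> S powr s"
    by (rule powr_mono2) (use s h in auto)
  then show "x \<le> S powr s" using s x by (simp add: powr_powr)
next
  assume h: "x \<le> S powr s"
  have "x powr (1 / s) \<le> (S powr s) powr (1 / s)"
    by (rule powr_mono2) (use s h x in auto)
  then show "x powr (1 / s) \<le> S" using s S by (simp add: powr_powr)
qed

lemma real_ratio:
  fixes s a b S :: real
  assumes s: "0 < s" and a: "0 < a" and b: "0 < b" and S: "0 < S"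
  shows "a powr (- 1 / s) * b powr (1 / s) \<le> S \<longleftrightarrow> b \<le> S powr s * a"
proof -
  have "a powr (- 1 / s) * b powr (1 / s) = (b / a) powr (1 / s)"
  proof -
    have "(b / a) powr (1 / s) = b powr (1 / s) / a powr (1 / s)"
      by (rule powr_divide)
    moreover have "a powr (- 1 / s) = inverse (a powr (1 / s))"
      using powr_minus[of a "1 / s"] by simp
    ultimately show ?thesis by (simp add: divide_inverse mult.commute)
  qed
  also have "(b / a) powr (1 / s) \<le> S \<longleftrightarrow> b / a \<le> S powr s"
    using powr_inv_le[OF s _ S, of "b / a"] a b by simp
  also have "b / a \<le> S powr s \<longleftrightarrow> b \<le> S powr s * a" using a by (simp add: divide_le_eq)
  finally show ?thesis .
qed

lemma epow_neg_top: "a < 0 \<Longrightarrow> epow top a = 0"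
  unfolding epow_def by simp
lemma epow_neg_zero: "a < 0 \<Longrightarrow> epow 0 a = top"
  unfolding epow_def by simp

lemma ennreal_pos_cases:
  fixes x :: ennreal
  obtains "x = 0" | "x = top" | x' where "x = ennreal x'" "0 < x'"
  by (metis ennreal_cases ennreal_less_zero_iff not_gr_zero)

lemma L1:
  assumes s: "0 < s" and h: "b \<le> epow S s * a"
  shows "epow a (- 1 / s) * epow b (1 / s) \<le> S"
proof -
  have ns: "- 1 / s < 0" using s by simp
  have ps: "0 < 1 / s" using s by simp
  show ?thesis
  proof (cases S rule: ennreal_pos_cases)
    case 1
    then have "b = 0" using h s by (simp add: epow_pos_zero)
    then show ?thesis using ps by (simp add: epow_pos_zero)
  next
    case 2 then show ?thesis by simp
  next
    case (3 S')
    show ?thesis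
    proof (cases a rule: ennreal_pos_cases)
      case 1
      then have "b = 0" using h by simp
      then show ?thesis using ps by (simp add: epow_pos_zero)
    next
      case 2 then show ?thesis using ns by (simp add: epow_neg_top)
    next
      case (3 a')
      have eS: "epow S s = ennreal (S' powr s)" using \<open>S = ennreal S'\<close> \<open>0 < S'\<close> by (simp add: epow_real)
      show ?thesis
      proof (cases b rule: ennreal_pos_cases)
        case 1 then show ?thesis using ps by (simp add: epow_pos_zero)
      next
        case 2 then show ?thesis using h eS 3 by (simp add: ennreal_mult'[symmetric] top_unique)
      next
        case (3 b')
        have "b' \<le> S' powr s * a'"
          using h eS 3 \<open>a = ennreal a'\<close> \<open>0 < a'\<close>
          by (simp add: ennreal_mult'[symmetric])
        then have "a' powr (- 1 / s) * b' powr (1 / s) \<le> S'"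
          using real_ratio[OF s \<open>0 < a'\<close> \<open>0 < b'\<close> \<open>0 < S'\<close>] by simp
        then show ?thesis using 3 \<open>a = ennreal a'\<close> \<open>0 < a'\<close> \<open>S = ennreal S'\<close>
          by (auto simp: epow_real ennreal_mult'[symmetric] intro!: ennreal_leI)
      qed
    qed
  qed
qed

lemma L2:
  assumes s: "0 < s" and a: "0 < a" "a < top" and h: "epow a (- 1 / s) * epow b (1 / s) \<le> S"
  shows "b \<le> epow S s * a"
proof -
  have ps: "0 < 1 / s" using s by simp
  obtain a' where a': "a = ennreal a'" "0 < a'" using a
    by (cases a rule: ennreal_pos_cases) auto
  have ea: "epow a (- 1 / s) = ennreal (a' powr (- 1 / s))" using a' by (simp add: epow_real)
  have eap: "0 < a' powr (- 1 / s)" using a' by simp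
  show ?thesis
  proof (cases S rule: ennreal_pos_cases)
    case 2
    then show ?thesis using a s by (simp add: epow_pos_top ennreal_mult_eq_top_iff)
  next
    case 1
    then have "b = 0"
    proof (cases b rule: ennreal_pos_cases)
      case 2 then show ?thesis using h 1 ea eap ps by (simp add: epow_pos_top)
    next
      case (3 b')
      then show ?thesis using h 1 ea eap ps by (simp add: epow_real ennreal_mult'[symmetric])
    qed
    then show ?thesis by simp
  next
    case (3 S')
    have eS: "epow S s = ennreal (S' powr s)" using 3 by (simp add: epow_real)
    show ?thesis
    proof (cases b rule: ennreal_pos_cases)
      case 1 then show ?thesis by simp
    next
      case 2 then show ?thesis using h 3 ea eap ps by (simp add: epow_pos_top top_unique)
    next
      case (3 b')
      have "a' powr (- 1 / s) * b' powr (1 / s) \<le> S'"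
        using h 3 \<open>S = ennreal S'\<close> \<open>0 < S'\<close> ea eap
        by (simp add: epow_real ennreal_mult'[symmetric])
      then have "b' \<le> S' powr s * a'"
        using real_ratio[OF s \<open>0 < a'\<close> \<open>0 < b'\<close> \<open>0 < S'\<close>] by simp
      then show ?thesis using 3 a' eS \<open>0 < S'\<close> by (simp add: ennreal_mult'[symmetric])
    qed
  qed
qed

definition absmono :: "(('a \<Rightarrow> real) \<Rightarrow> ennreal) \<Rightarrow> bool" where
  "absmono N \<longleftrightarrow> (\<forall>g1 g2. (\<forall>x. \<bar>g1 x\<bar> \<le> \<bar>g2 x\<bar>) \<longrightarrow> N g1 \<le> N g2)"

lemma absmonoD: "absmono N \<Longrightarrow> (\<And>x. \<bar>g1 x\<bar> \<le> \<bar>g2 x\<bar>) \<Longrightarrow> N g1 \<le> N g2"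
  unfolding absmono_def by blast

lemma absmono_Lnorm: "0 < r \<Longrightarrow> absmono (Lnorm M r)"
  unfolding absmono_def Lnorm_def
  by (auto intro!: epow_mono nn_integral_mono ennreal_leI powr_mono2)

lemma abs_ind_le: "\<bar>g1 x\<bar> \<le> \<bar>g2 x\<bar> \<Longrightarrow> \<bar>indicator T x * (g1 x :: real)\<bar> \<le> \<bar>indicator T x * g2 x\<bar>"
  by (simp add: indicator_def)

lemma absmono_sup:
  fixes N :: "('a \<Rightarrow> real) \<Rightarrow> ennreal"
  shows "absmono N \<Longrightarrow> absmono (sup_size s Ts nf N)"
proof -
  assume N: "absmono N"
  show ?thesis unfolding absmono_def
  proof (intro allI impI)
    fix g1 g2 :: "'a \<Rightarrow> real" assume h: "\<forall>x. \<bar>g1 x\<bar> \<le> \<bar>g2 x\<bar>"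
    have "N (\<lambda>x. indicator T x * g1 x) \<le> N (\<lambda>x. indicator T x * g2 x)" for T
      by (rule absmonoD[OF N]) (simp add: abs_ind_le h)
    then show "sup_size s Ts nf N g1 \<le> sup_size s Ts nf N g2"
      unfolding sup_size_def by (intro SUP_subset_mono order.refl mult_left_mono) auto
  qed
qed

lemma level_mono:
  assumes "absmono S" "\<And>x. \<bar>g1 x\<bar> \<le> \<bar>g2 x\<bar>"
  shows "level_meas Xs Bs nf S g1 lam \<le> level_meas Xs Bs nf S g2 lam"
  unfolding level_meas_def
proof (rule INF_superset_mono)
  have "S (\<lambda>x. indicator (Xs - B) x * g1 x) \<le> S (\<lambda>x. indicator (Xs - B) x * g2 x)" for B
    by (rule absmonoD[OF assms(1)]) (simp add: abs_ind_le assms(2))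
  then show "{B \<in> Bs. S (\<lambda>x. indicator (Xs - B) x * g2 x) \<le> ennreal lam}
      \<subseteq> {B \<in> Bs. S (\<lambda>x. indicator (Xs - B) x * g1 x) \<le> ennreal lam}"
    by (auto intro: order_trans)
qed simp

lemma level_antimono:
  "lam \<le> lam' \<Longrightarrow> level_meas Xs Bs nf S g lam' \<le> level_meas Xs Bs nf S g lam"
  unfolding level_meas_def
  by (rule INF_superset_mono) (auto intro: order_trans ennreal_leI)

lemma Lq_of_dist_mono:
  assumes "0 < q" "\<And>t. d1 t \<le> d2 t"
  shows "Lq_of_dist q d1 \<le> Lq_of_dist q d2"
  unfolding Lq_of_dist_def using assms
  by (auto intro!: epow_mono nn_integral_mono mult_right_mono mult_left_mono)

lemma absmono_Lq: "0 < q \<Longrightarrow> absmono S \<Longrightarrow> absmono (\<lambda>g. Lq_of_dist q (level_meas Xs Bs nf S g))"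
  unfolding absmono_def[where N="\<lambda>g. Lq_of_dist q (level_meas Xs Bs nf S g)"]
  by (auto intro!: Lq_of_dist_mono level_mono)

lemma absmono_Linf_nu: "0 < r \<Longrightarrow> absmono (Linf_nu r)"
  unfolding Linf_nu_def[abs_def] by (intro absmono_sup absmono_Lnorm)
lemma absmono_Lq_nu: "0 < q \<Longrightarrow> 0 < r \<Longrightarrow> absmono (Lq_nu q r)"
  unfolding Lq_nu_def[abs_def] by (intro absmono_Lq absmono_Linf_nu)
lemma absmono_Linf_mu: "0 < q \<Longrightarrow> 0 < r \<Longrightarrow> absmono (Linf_mu q r)"
  unfolding Linf_mu_def[abs_def] by (intro absmono_sup absmono_Lq_nu)
lemma absmono_dLinf_nu: "0 < r \<Longrightarrow> absmono (dLinf_nu r)"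
  unfolding dLinf_nu_def[abs_def] by (intro absmono_sup absmono_Lnorm)
lemma absmono_dLq_nu: "0 < q \<Longrightarrow> 0 < r \<Longrightarrow> absmono (dLq_nu q r)"
  unfolding dLq_nu_def[abs_def] by (intro absmono_Lq absmono_dLinf_nu)

lemma antimono_meas:
  fixes d :: "real \<Rightarrow> ennreal"
  assumes "\<And>x y. x \<le> y \<Longrightarrow> d y \<le> d x"
  shows "d \<in> borel_measurable borel"
proof (rule borel_measurableI_greater)
  fix y
  have "is_interval {x. y < d x}"
    unfolding is_interval_1 using assms by (auto intro: less_le_trans)
  then show "{x \<in> space borel. y < d x} \<in> sets borel"
    using real_interval_borel_measurable by simp
qed


definition costn :: "dpt set \<Rightarrow> ennreal" where
  "costn K = (\<integral>\<^sup>+ k. ennreal (2 powi fst (snd k)) \<partial>count_space K)"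
definition costm :: "(int \<times> int) set \<Rightarrow> ennreal" where
  "costm K = (\<integral>\<^sup>+ k. ennreal (2 powi snd k) \<partial>count_space K)"

lemma dnu_alt: "dnu A = (INF K\<in>{K. A \<subseteq> (\<Union>k\<in>K. dtree (fst k) (fst (snd k)) (snd (snd k)))}. costn K)"
  unfolding dnu_def costn_def by (simp add: case_prod_beta')
lemma dmu_alt: "dmu A = (INF K\<in>{K. A \<subseteq> (\<Union>k\<in>K. dstrip (fst k) (snd k))}. costm K)"
  unfolding dmu_def costm_def by (simp add: case_prod_beta')

lemma pt_le_int: "k0 \<in> K \<Longrightarrow> w k0 \<le> (\<integral>\<^sup>+k. w k \<partial>count_space K)"
proof -
  assume k0: "k0 \<in> K"
  have "(\<integral>\<^sup>+k. w k * indicator {k0} k \<partial>count_space K) = (\<Sum>k\<in>{k0}. w k * indicator {k0} k)"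
    by (rule nn_integral_count_space') (use k0 in auto)
  also have "\<dots> = w k0" by simp
  finally have "w k0 = (\<integral>\<^sup>+k. w k * indicator {k0} k \<partial>count_space K)" by simp
  also have "\<dots> \<le> (\<integral>\<^sup>+k. w k \<partial>count_space K)"
    by (intro nn_integral_mono) (simp add: indicator_def)
  finally show ?thesis .
qed

lemma mem_dtree_self: "(m, l, n) \<in> dtree m l n"
  unfolding dtree_eq by simp
lemma mem_dstrip_self: "(m, l, n) \<in> dstrip m l"
  unfolding dstrip_eq by simp

lemma dnu_le: "A \<subseteq> (\<Union>k\<in>K. dtree (fst k) (fst (snd k)) (snd (snd k))) \<Longrightarrow> dnu A \<le> costn K"
  unfolding dnu_alt by (rule INF_lower) simp
lemma dmu_le: "A \<subseteq> (\<Union>k\<in>K. dstrip (fst k) (snd k)) \<Longrightarrow> dmu A \<le> costm K"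
  unfolding dmu_alt by (rule INF_lower) simp

lemma powi_mono: "l' \<le> l \<Longrightarrow> (2::real) powi l' \<le> 2 powi l"
  by (rule power_int_increasing) auto

lemma dnu_ge:
  assumes "(m', l', n') \<in> A"
  shows "ennreal (2 powi l') \<le> dnu A"
  unfolding dnu_alt
proof (rule INF_greatest)
  fix K assume "K \<in> {K. A \<subseteq> (\<Union>k\<in>K. dtree (fst k) (fst (snd k)) (snd (snd k)))}"
  then obtain k where k: "k \<in> K" "(m', l', n') \<in> dtree (fst k) (fst (snd k)) (snd (snd k))"
    using assms by blast
  then have "l' \<le> fst (snd k)" unfolding dtree_eq by auto
  then have "ennreal (2 powi l') \<le> ennreal (2 powi fst (snd k))"
    by (intro ennreal_leI powi_mono)
  also have "\<dots> \<le> costn K" unfolding costn_def by (rule pt_le_int[OF k(1)])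
  finally show "ennreal (2 powi l') \<le> costn K" .
qed

lemma dmu_ge:
  assumes "(m', l', n') \<in> A"
  shows "ennreal (2 powi l') \<le> dmu A"
  unfolding dmu_alt
proof (rule INF_greatest)
  fix K assume "K \<in> {K. A \<subseteq> (\<Union>k\<in>K. dstrip (fst k) (snd k))}"
  then obtain k where k: "k \<in> K" "(m', l', n') \<in> dstrip (fst k) (snd k)"
    using assms by blast
  then have "l' \<le> snd k" unfolding dstrip_eq by auto
  then have "ennreal (2 powi l') \<le> ennreal (2 powi snd k)"
    by (intro ennreal_leI powi_mono)
  also have "\<dots> \<le> costm K" unfolding costm_def by (rule pt_le_int[OF k(1)])
  finally show "ennreal (2 powi l') \<le> costm K" .
qed

lemma costn_single: "costn {k} = ennreal (2 powi fst (snd k))"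
  unfolding costn_def by (simp add: nn_integral_count_space_finite)
lemma costm_single: "costm {k} = ennreal (2 powi snd k)"
  unfolding costm_def by (simp add: nn_integral_count_space_finite)

lemma dnu_tree: "dnu (dtree m l n) = ennreal (2 powi l)"
proof (rule antisym)
  show "dnu (dtree m l n) \<le> ennreal (2 powi l)"
    using dnu_le[of "dtree m l n" "{(m, l, n)}"] costn_single[of "(m, l, n)"] by simp
  show "ennreal (2 powi l) \<le> dnu (dtree m l n)"
    by (rule dnu_ge[OF mem_dtree_self])
qed

lemma dmu_strip: "dmu (dstrip m l) = ennreal (2 powi l)"
proof (rule antisym)
  show "dmu (dstrip m l) \<le> ennreal (2 powi l)"
    using dmu_le[of "dstrip m l" "{(m, l)}"] costm_single[of "(m, l)"] by simp
  show "ennreal (2 powi l) \<le> dmu (dstrip m l)"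
    by (rule dmu_ge[OF mem_dstrip_self])
qed

lemma dnu_single: "dnu {(m, l, n)} = ennreal (2 powi l)"
proof (rule antisym)
  show "dnu {(m, l, n)} \<le> ennreal (2 powi l)"
    using dnu_le[of "{(m, l, n)}" "{(m, l, n)}"] costn_single[of "(m, l, n)"] mem_dtree_self by simp
  show "ennreal (2 powi l) \<le> dnu {(m, l, n)}"
    by (rule dnu_ge) simp
qed

lemma dnu_empty: "dnu {} = 0"
  using dnu_le[of "{}" "{}"] by (simp add: costn_def nn_integral_count_space_finite)

lemma dnu_pos: "A \<noteq> {} \<Longrightarrow> 0 < dnu A"
proof -
  assume "A \<noteq> {}"
  then obtain m l n where "(m, l, n) \<in> A" by auto
  then have "ennreal (2 powi l) \<le> dnu A" by (rule dnu_ge)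
  then show ?thesis by (smt (verit) ennreal_less_zero_iff powi_pos order.strict_trans2)
qed

lemma dmu_pos: "A \<noteq> {} \<Longrightarrow> 0 < dmu A"
proof -
  assume "A \<noteq> {}"
  then obtain m l n where "(m, l, n) \<in> A" by auto
  then have "ennreal (2 powi l) \<le> dmu A" by (rule dmu_ge)
  then show ?thesis by (smt (verit) ennreal_less_zero_iff powi_pos order.strict_trans2)
qed

lemma dnu_mono: "A \<subseteq> A' \<Longrightarrow> dnu A \<le> dnu A'"
  unfolding dnu_alt by (rule INF_superset_mono) auto

lemma union_bound:
  fixes w :: "'a \<Rightarrow> ennreal" and A :: "'i \<Rightarrow> 'a set"
  assumes I: "countable I"
  shows "(\<integral>\<^sup>+k. w k * indicator (\<Union>i\<in>I. A i) k \<partial>count_space UNIV)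
     \<le> (\<integral>\<^sup>+i. (\<integral>\<^sup>+k. w k * indicator (A i) k \<partial>count_space UNIV) \<partial>count_space I)"
proof -
  have "(\<integral>\<^sup>+k. w k * indicator (\<Union>i\<in>I. A i) k \<partial>count_space UNIV)
      \<le> (\<integral>\<^sup>+k. (\<integral>\<^sup>+i. w k * indicator (A i) k \<partial>count_space I) \<partial>count_space UNIV)"
  proof (intro nn_integral_mono)
    fix k
    show "w k * indicator (\<Union>i\<in>I. A i) k \<le> (\<integral>\<^sup>+i. w k * indicator (A i) k \<partial>count_space I)"
    proof (cases "k \<in> (\<Union>i\<in>I. A i)")
      case True
      then obtain i where "i \<in> I" "k \<in> A i" by auto
      then show ?thesis using pt_le_int[of i I "\<lambda>i. w k * indicator (A i) k"] True by simp
    qed simp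
  qed
  also have "\<dots> = (\<integral>\<^sup>+i. (\<integral>\<^sup>+k. w k * indicator (A i) k \<partial>count_space UNIV) \<partial>count_space I)"
    by (rule nn_integral_count_space_nn_integral[OF I]) simp
  finally show ?thesis .
qed

lemma weights_le:
  fixes e :: real
  assumes I: "countable I" and e: "0 < e"
  shows "(\<integral>\<^sup>+i. ennreal (e * (1/2) ^ Suc (to_nat_on I i)) \<partial>count_space I) \<le> ennreal e"
proof -
  define h where "h n = ennreal (e * (1/2) ^ Suc n)" for n
  have "(\<integral>\<^sup>+i. h (to_nat_on I i) \<partial>count_space I) = (\<integral>\<^sup>+n. h n \<partial>count_space (to_nat_on I ` I))"
    by (rule nn_integral_bij_count_space) (simp add: I bij_betw_def inj_on_to_nat_on)
  also have "\<dots> \<le> (\<integral>\<^sup>+n. h n \<partial>count_space UNIV)"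
    by (subst nn_integral_count_space_indicator[of "to_nat_on I ` I"])
       (auto intro!: nn_integral_mono simp: indicator_def)
  also have "\<dots> = (\<Sum>n. h n)" by (rule nn_integral_count_space_nat)
  also have "\<dots> = ennreal (\<Sum>n. e * (1/2) ^ Suc n)"
    unfolding h_def using e
    by (intro suminf_ennreal2) (auto intro!: summable_mult summable_geometric)
  also have "(\<Sum>n. e * (1/2) ^ Suc n) = e"
  proof -
    have "(\<lambda>n. (1/2::real) ^ Suc n) sums 1" using power_half_series .
    then have "(\<lambda>n. e * (1/2::real) ^ Suc n) sums (e * 1)" by (rule sums_mult)
    then show ?thesis by (simp add: sums_iff)
  qed
  finally show ?thesis unfolding h_def by simp
qed

lemma choice_eps:
  fixes c :: "'i \<Rightarrow> 'b \<Rightarrow> ennreal" and e :: real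
  assumes I: "countable I" and ne: "\<And>i. i \<in> I \<Longrightarrow> \<exists>y. P i y" and e: "0 < e"
  shows "\<exists>Y. (\<forall>i\<in>I. P i (Y i)) \<and>
     (\<integral>\<^sup>+i. c i (Y i) \<partial>count_space I) \<le> (\<integral>\<^sup>+i. (INF y\<in>{y. P i y}. c i y) \<partial>count_space I) + ennreal e"
proof (cases "(\<integral>\<^sup>+i. (INF y\<in>{y. P i y}. c i y) \<partial>count_space I) = top")
  case True
  define Y where "Y i = (SOME y. P i y)" for i
  have "\<forall>i\<in>I. P i (Y i)" unfolding Y_def using ne by (metis someI_ex)
  then show ?thesis using True by auto
next
  case False
  define w where "w i = e * (1/2) ^ Suc (to_nat_on I i)" for i
  have wp: "0 < w i" for i unfolding w_def using e by simp
  have "\<exists>y. P i y \<and> c i y \<le> (INF y\<in>{y. P i y}. c i y) + ennreal (w i)" if i: "i \<in> I" for i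
  proof -
    have "(INF y\<in>{y. P i y}. c i y) \<le> (\<integral>\<^sup>+i. (INF y\<in>{y. P i y}. c i y) \<partial>count_space I)"
      by (rule pt_le_int[OF i])
    then have fin: "(INF y\<in>{y. P i y}. c i y) \<noteq> top" using False by (metis top_unique)
    then obtain r where r: "(INF y\<in>{y. P i y}. c i y) = ennreal r" "0 \<le> r"
      by (cases "(INF y\<in>{y. P i y}. c i y)") auto
    have "ennreal r < ennreal (r + w i)"
      by (rule ennreal_lessI) (use wp[of i] r in auto)
    then have "(INF y\<in>{y. P i y}. c i y) < (INF y\<in>{y. P i y}. c i y) + ennreal (w i)"
      using r wp[of i] by (simp add: ennreal_plus[symmetric] del: ennreal_plus)
    then obtain y where "P i y" "c i y < (INF y\<in>{y. P i y}. c i y) + ennreal (w i)"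
      by (auto simp: INF_less_iff)
    then show ?thesis by (auto intro: less_imp_le)
  qed
  then obtain Y where Y: "\<And>i. i \<in> I \<Longrightarrow> P i (Y i) \<and> c i (Y i) \<le> (INF y\<in>{y. P i y}. c i y) + ennreal (w i)"
    by metis
  have "(\<integral>\<^sup>+i. c i (Y i) \<partial>count_space I) \<le> (\<integral>\<^sup>+i. (INF y\<in>{y. P i y}. c i y) + ennreal (w i) \<partial>count_space I)"
    using Y by (intro nn_integral_mono_AE) (auto simp: AE_count_space)
  also have "\<dots> = (\<integral>\<^sup>+i. (INF y\<in>{y. P i y}. c i y) \<partial>count_space I) + (\<integral>\<^sup>+i. ennreal (w i) \<partial>count_space I)"
    by (rule nn_integral_add) auto
  also have "\<dots> \<le> (\<integral>\<^sup>+i. (INF y\<in>{y. P i y}. c i y) \<partial>count_space I) + ennreal e"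
    using weights_le[OF I e] unfolding w_def by (intro add_left_mono)
  finally show ?thesis using Y by auto
qed

lemma dnu_subadd:
  fixes B :: "'i \<Rightarrow> dpt set"
  assumes I: "countable I"
  shows "dnu (\<Union>i\<in>I. B i) \<le> (\<integral>\<^sup>+i. dnu (B i) \<partial>count_space I)"
proof (rule ennreal_le_epsilon)
  fix e :: real assume e: "0 < e"
  let ?U = "\<lambda>K. (\<Union>k\<in>K. dtree (fst k) (fst (snd k)) (snd (snd k)))"
  have "x \<in> ?U UNIV" for x
  proof -
    obtain a b c where "x = (a, b, c)" by (cases x) auto
    then show ?thesis using mem_dtree_self[of a b c] by (auto intro!: bexI[of _ "(a, b, c)"])
  qed
  then have ne: "\<exists>K. B i \<subseteq> ?U K" for i by blast
  obtain Kc where Kc: "\<forall>i\<in>I. B i \<subseteq> ?U (Kc i)"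
    and s: "(\<integral>\<^sup>+i. costn (Kc i) \<partial>count_space I) \<le> (\<integral>\<^sup>+i. (INF K\<in>{K. B i \<subseteq> ?U K}. costn K) \<partial>count_space I) + ennreal e"
  proof -
    have "\<exists>Y. (\<forall>i\<in>I. B i \<subseteq> ?U (Y i)) \<and>
     (\<integral>\<^sup>+i. costn (Y i) \<partial>count_space I) \<le> (\<integral>\<^sup>+i. (INF K\<in>{K. B i \<subseteq> ?U K}. costn K) \<partial>count_space I) + ennreal e"
      by (rule choice_eps[OF I ne e])
    then show ?thesis using that by blast
  qed
  have "dnu (\<Union>i\<in>I. B i) \<le> costn (\<Union>i\<in>I. Kc i)"
    by (rule dnu_le) (use Kc in fastforce)
  also have "\<dots> = (\<integral>\<^sup>+k. ennreal (2 powi fst (snd k)) * indicator (\<Union>i\<in>I. Kc i) k \<partial>count_space UNIV)"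
    unfolding costn_def by (rule nn_integral_count_space_indicator) simp
  also have "\<dots> \<le> (\<integral>\<^sup>+i. (\<integral>\<^sup>+k. ennreal (2 powi fst (snd k)) * indicator (Kc i) k \<partial>count_space UNIV) \<partial>count_space I)"
    by (rule union_bound[OF I])
  also have "\<dots> = (\<integral>\<^sup>+i. costn (Kc i) \<partial>count_space I)"
    unfolding costn_def by (simp add: nn_integral_count_space_indicator)
  also have "\<dots> \<le> (\<integral>\<^sup>+i. dnu (B i) \<partial>count_space I) + ennreal e"
    using s unfolding dnu_alt .
  finally show "dnu (\<Union>i\<in>I. B i) \<le> (\<integral>\<^sup>+i. dnu (B i) \<partial>count_space I) + ennreal e" .
qed


lemma le_mult_INF:
  fixes c X :: ennreal
  assumes c: "c \<noteq> top" and A: "A \<noteq> {}" and h: "\<And>x. x \<in> A \<Longrightarrow> X \<le> c * f x"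
  shows "X \<le> c * (INF x\<in>A. f x)"
proof (cases "c = 0")
  case True
  then show ?thesis using A h by auto
next
  case False
  have "X / c \<le> f x" if "x \<in> A" for x
    using h[OF that] c False using divide_le_posI_ennreal not_gr_zero by blast
  then have "X / c \<le> (INF x\<in>A. f x)" by (rule INF_greatest)
  then have "c * (X / c) \<le> c * (INF x\<in>A. f x)" by (rule mult_left_mono) simp
  moreover have "c * (X / c) = X"
    using c False by (metis divide_eq_1_ennreal ennreal_divide_times mult_1)
  ultimately show ?thesis by simp
qed

abbreviation dtreeK :: "dpt \<Rightarrow> dpt set" where
  "dtreeK k \<equiv> dtree (fst k) (fst (snd k)) (snd (snd k))"

definition TS :: "real \<Rightarrow> (dpt \<Rightarrow> real) \<Rightarrow> ennreal" where
  "TS r G = (SUP k\<in>UNIV. epow (ennreal (2 powi fst (snd k))) (- 1 / r) * epow (Ed r G (dtreeK k)) (1 / r))"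

lemma Lnorm_count: "Lnorm (count_space UNIV) r (\<lambda>x. indicator A x * G x) = epow (Ed r G A) (1 / r)"
  unfolding Lnorm_def Ed_def abs_ind_powr ennreal_ind_mult by (simp add: mult.commute)

lemma dLinf_alt: "dLinf_nu r G = (SUP A\<in>{A. A \<noteq> {}}. epow (dnu A) (- 1 / r) * epow (Ed r G A) (1 / r))"
  unfolding dLinf_nu_def sup_size_def Lnorm_count ..

lemma Ed_mono: "A \<subseteq> A' \<Longrightarrow> Ed r G A \<le> Ed r G A'"
  unfolding Ed_def by (intro nn_integral_mono mult_left_mono) (auto simp: indicator_def)

lemma dtreeK_ne: "dtreeK k \<noteq> {}"
  using mem_dtree_self[of "fst k" "fst (snd k)" "snd (snd k)"] by auto

lemma epow_ne_top: "0 < r \<Longrightarrow> x \<noteq> top \<Longrightarrow> epow x r \<noteq> top"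
  unfolding epow_def by auto

lemma TS_le_dLinf: "TS r G \<le> dLinf_nu r G"
  unfolding TS_def dLinf_alt
proof (rule SUP_least)
  fix k :: dpt
  have "epow (dnu (dtreeK k)) (- 1 / r) * epow (Ed r G (dtreeK k)) (1 / r)
      \<le> (SUP A\<in>{A. A \<noteq> {}}. epow (dnu A) (- 1 / r) * epow (Ed r G A) (1 / r))"
    by (rule SUP_upper) (simp add: dtreeK_ne)
  then show "epow (ennreal (2 powi fst (snd k))) (- 1 / r) * epow (Ed r G (dtreeK k)) (1 / r)
      \<le> (SUP A\<in>{A. A \<noteq> {}}. epow (dnu A) (- 1 / r) * epow (Ed r G A) (1 / r))"
    by (simp add: dnu_tree)
qed

lemma Ed_tree_le_TS:
  assumes r: "0 < r"
  shows "Ed r G (dtreeK k) \<le> epow (TS r G) r * ennreal (2 powi fst (snd k))"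
proof (rule L2[OF r])
  show "epow (ennreal (2 powi fst (snd k))) (- 1 / r) * epow (Ed r G (dtreeK k)) (1 / r) \<le> TS r G"
    unfolding TS_def by (rule SUP_upper) simp
qed auto

lemma dLinf_le_TS:
  assumes r: "0 < r"
  shows "dLinf_nu r G \<le> TS r G"
  unfolding dLinf_alt
proof (rule SUP_least)
  fix A :: "dpt set" assume "A \<in> {A. A \<noteq> {}}"
  then have A: "A \<noteq> {}" by simp
  show "epow (dnu A) (- 1 / r) * epow (Ed r G A) (1 / r) \<le> TS r G"
  proof (rule L1[OF r])
    show "Ed r G A \<le> epow (TS r G) r * dnu A"
    proof (cases "TS r G = top")
      case True
      then show ?thesis using dnu_pos[OF A] r by (simp add: epow_pos_top ennreal_mult_eq_top_iff)
    next
      case False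
      let ?c = "epow (TS r G) r"
      let ?U = "\<lambda>K. (\<Union>k\<in>K. dtree (fst k) (fst (snd k)) (snd (snd k)))"
      have c: "?c \<noteq> top" using False r by (simp add: epow_ne_top)
      have "Ed r G A \<le> ?c * (INF K\<in>{K. A \<subseteq> ?U K}. costn K)"
      proof (rule le_mult_INF[OF c])
        have "x \<in> ?U UNIV" for x
        proof -
          obtain a b c where "x = (a, b, c)" by (cases x) auto
          then show ?thesis using mem_dtree_self[of a b c] by (auto intro!: bexI[of _ "(a, b, c)"])
        qed
        then show "{K. A \<subseteq> ?U K} \<noteq> {}" by blast
      next
        fix K assume "K \<in> {K. A \<subseteq> ?U K}"
        then have K: "A \<subseteq> ?U K" by simp
        have "Ed r G A \<le> Ed r G (?U K)" by (rule Ed_mono[OF K])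
        also have "\<dots> \<le> (\<integral>\<^sup>+k. Ed r G (dtreeK k) \<partial>count_space K)"
          unfolding Ed_def by (rule union_bound) simp
        also have "\<dots> \<le> (\<integral>\<^sup>+k. ?c * ennreal (2 powi fst (snd k)) \<partial>count_space K)"
          by (intro nn_integral_mono Ed_tree_le_TS[OF r])
        also have "\<dots> = ?c * costn K"
          unfolding costn_def by (rule nn_integral_cmult) simp
        finally show "Ed r G A \<le> ?c * costn K" .
      qed
      then show ?thesis unfolding dnu_alt .
    qed
  qed
qed

lemma D1: "0 < r \<Longrightarrow> dLinf_nu r G = TS r G"
  by (intro antisym dLinf_le_TS TS_le_dLinf)


lemma preim_sub: "B \<subseteq> Xsp \<Longrightarrow> B \<subseteq> preim S \<longleftrightarrow> idx ` B \<subseteq> S"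
  unfolding preim_def by auto

lemma idx_preim: "idx ` preim S = S"
  unfolding preim_def by (rule idx_image)

lemma tree_preim: "tree m l n = preim (dtree m l n)"
  unfolding tree_eq preim_def ..
lemma strip_preim: "strip m l = preim (dstrip m l)"
  unfolding strip_eq preim_def ..

lemma UN_trees: "(\<Union>(m, l, n)\<in>K. tree m l n) = preim (\<Union>(m, l, n)\<in>K. dtree m l n)"
  unfolding tree_preim preim_def by auto
lemma UN_strips: "(\<Union>(m, l)\<in>K. strip m l) = preim (\<Union>(m, l)\<in>K. dstrip m l)"
  unfolding strip_preim preim_def by auto

lemma nu_eq: "B \<subseteq> Xsp \<Longrightarrow> nu B = dnu (idx ` B)"
  unfolding nu_def dnu_def UN_trees by (simp add: preim_sub)
lemma mu_eq: "B \<subseteq> Xsp \<Longrightarrow> mu B = dmu (idx ` B)"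
  unfolding mu_def dmu_def UN_strips by (simp add: preim_sub)

lemma preim_Xsp: "preim S \<subseteq> Xsp"
  unfolding preim_def by auto

lemma nu_preim: "nu (preim S) = dnu S"
  using nu_eq[OF preim_Xsp] idx_preim by simp
lemma mu_preim: "mu (preim S) = dmu S"
  using mu_eq[OF preim_Xsp] idx_preim by simp

lemma Lnorm_preim:
  assumes "good r g" "0 < r"
  shows "Lnorm lebesgue r (\<lambda>x. indicator (preim S) x * g x) = epow (Ed r (Fdisc g r) S) (1 / r)"
  unfolding Lnorm_def int_preim[OF assms] ..

lemma T1:
  assumes g: "good r g" and r: "0 < r"
  shows "Linf_nu r g = dLinf_nu r (Fdisc g r)"
proof -
  have "Linf_nu r g = (SUP k\<in>UNIV. epow (nu (preim (dtreeK k))) (- 1 / r)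
          * Lnorm lebesgue r (\<lambda>x. indicator (preim (dtreeK k)) x * g x))"
    unfolding Linf_nu_def sup_size_def Trees_def tree_preim
    by (simp add: image_image case_prod_beta')
  also have "\<dots> = TS r (Fdisc g r)"
    unfolding TS_def nu_preim Lnorm_preim[OF g r] dnu_tree ..
  also have "\<dots> = dLinf_nu r (Fdisc g r)" using D1[OF r] by simp
  finally show ?thesis .
qed

lemma preim_compl: "Xsp - preim S = preim (- S)"
  unfolding preim_def by auto

lemma LT:
  assumes nue: "\<And>B. B \<subseteq> Xsp \<Longrightarrow> nuc B = nud (idx ` B)"
    and Le: "\<And>S. Lc (\<lambda>x. indicator (preim (- S)) x * g x) = Ld (\<lambda>k. indicator (- S) k * G k)"
    and mono: "absmono Lc"
  shows "level_meas Xsp Bmeas nuc Lc g lam = level_meas UNIV UNIV nud Ld G lam"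
  unfolding level_meas_def
proof (rule antisym)
  show "(INF B\<in>{B \<in> Bmeas. Lc (\<lambda>x. indicator (Xsp - B) x * g x) \<le> ennreal lam}. nuc B)
      \<le> (INF B\<in>{B \<in> UNIV. Ld (\<lambda>x. indicator (UNIV - B) x * G x) \<le> ennreal lam}. nud B)"
  proof (rule INF_greatest)
    fix S assume "S \<in> {B \<in> UNIV. Ld (\<lambda>x. indicator (UNIV - B) x * G x) \<le> ennreal lam}"
    then have S: "Ld (\<lambda>k. indicator (- S) k * G k) \<le> ennreal lam" by (simp add: Compl_eq_Diff_UNIV)
    have mem: "preim S \<in> {B \<in> Bmeas. Lc (\<lambda>x. indicator (Xsp - B) x * g x) \<le> ennreal lam}"
      using S Le[of S] unfolding Bmeas_def by (simp add: preim_Xsp preim_compl)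
    have eq: "nuc (preim S) = nud S" using nue[OF preim_Xsp] idx_preim by simp
    show "(INF B\<in>{B \<in> Bmeas. Lc (\<lambda>x. indicator (Xsp - B) x * g x) \<le> ennreal lam}. nuc B) \<le> nud S"
      by (rule INF_lower2[OF mem]) (simp add: eq)
  qed
next
  show "(INF B\<in>{B \<in> UNIV. Ld (\<lambda>x. indicator (UNIV - B) x * G x) \<le> ennreal lam}. nud B)
      \<le> (INF B\<in>{B \<in> Bmeas. Lc (\<lambda>x. indicator (Xsp - B) x * g x) \<le> ennreal lam}. nuc B)"
  proof (rule INF_greatest)
    fix B assume "B \<in> {B \<in> Bmeas. Lc (\<lambda>x. indicator (Xsp - B) x * g x) \<le> ennreal lam}"
    then have B: "B \<subseteq> Xsp" "Lc (\<lambda>x. indicator (Xsp - B) x * g x) \<le> ennreal lam"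
      unfolding Bmeas_def by auto
    have sub: "preim (- (idx ` B)) \<subseteq> Xsp - B" unfolding preim_def by auto
    have "Ld (\<lambda>k. indicator (- (idx ` B)) k * G k) = Lc (\<lambda>x. indicator (preim (- (idx ` B))) x * g x)"
      using Le by simp
    also have "\<dots> \<le> Lc (\<lambda>x. indicator (Xsp - B) x * g x)"
      by (rule absmonoD[OF mono]) (use sub in \<open>auto simp: indicator_def\<close>)
    finally have mem: "idx ` B \<in> {B \<in> UNIV. Ld (\<lambda>x. indicator (UNIV - B) x * G x) \<le> ennreal lam}"
      using B by (simp add: Compl_eq_Diff_UNIV)
    show "(INF B\<in>{B \<in> UNIV. Ld (\<lambda>x. indicator (UNIV - B) x * G x) \<le> ennreal lam}. nud B) \<le> nuc B"
      by (rule INF_lower2[OF mem]) (simp add: nue[OF B(1)])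
  qed
qed

lemma T2:
  assumes g: "good r g" and r: "0 < r" and q: "0 < q"
  shows "Lq_nu q r g = dLq_nu q r (Fdisc g r)"
proof -
  have "level_meas Xsp Bmeas nu (Linf_nu r) g lam = level_meas UNIV UNIV dnu (dLinf_nu r) (Fdisc g r) lam" for lam
  proof (rule LT)
    show "nu B = dnu (idx ` B)" if "B \<subseteq> Xsp" for B using nu_eq[OF that] .
    show "absmono (Linf_nu r)" by (rule absmono_Linf_nu[OF r])
    fix S
    have "good r (\<lambda>x. indicator (preim (- S)) x * g x)" by (rule good_ind[OF g preim_meas])
    then show "Linf_nu r (\<lambda>x. indicator (preim (- S)) x * g x)
        = dLinf_nu r (\<lambda>k. indicator (- S) k * Fdisc g r k)"
      using T1[OF _ r] Fdisc_ind[OF g r] by simp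
  qed
  then have "level_meas Xsp Bmeas nu (Linf_nu r) g = level_meas UNIV UNIV dnu (dLinf_nu r) (Fdisc g r)"
    by (intro ext)
  then show ?thesis unfolding Lq_nu_def dLq_nu_def by simp
qed


lemma div_chain:
  assumes "a \<le> b" "b \<le> c"
  shows "(x::int) div 2 ^ nat (c - a) = x div 2 ^ nat (b - a) div 2 ^ nat (c - b)"
proof -
  have "nat (c - a) = nat (b - a) + nat (c - b)" using assms by simp
  then show ?thesis by (simp add: div_div_pow)
qed

abbreviation dstripK :: "int \<times> int \<Rightarrow> dpt set" where
  "dstripK k \<equiv> dstrip (fst k) (snd k)"

lemma strip_nest:
  assumes ne: "dstrip a1 l1 \<inter> dstrip a2 l2 \<noteq> {}" and l: "l1 \<le> l2"
  shows "dstrip a1 l1 \<subseteq> dstrip a2 l2"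
proof -
  obtain m' l' n' where p: "(m', l', n') \<in> dstrip a1 l1" "(m', l', n') \<in> dstrip a2 l2"
    using ne by auto
  then have "l' \<le> l1" "m' div 2 ^ nat (l1 - l') = a1" "m' div 2 ^ nat (l2 - l') = a2"
    unfolding dstrip_eq by auto
  then have a2: "a2 = a1 div 2 ^ nat (l2 - l1)" using div_chain[of l' l1 l2 m'] l by simp
  show ?thesis
  proof
    fix x assume "x \<in> dstrip a1 l1"
    then obtain m'' l'' n'' where x: "x = (m'', l'', n'')" "l'' \<le> l1" "m'' div 2 ^ nat (l1 - l'') = a1"
      unfolding dstrip_eq by auto
    then show "x \<in> dstrip a2 l2"
      unfolding dstrip_eq using div_chain[of l'' l1 l2 m''] l a2 by auto
  qed
qed

lemma strip_scale: "dstrip a l \<subseteq> dstrip a' l' \<Longrightarrow> l \<le> l'"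
proof -
  assume h: "dstrip a l \<subseteq> dstrip a' l'"
  have "(a, l, 0) \<in> dstrip a' l'" using h mem_dstrip_self by blast
  then show ?thesis by (simp add: dstrip_eq)
qed

lemma strip_same_scale: "dstrip a l \<subseteq> dstrip a' l \<Longrightarrow> a' = a"
proof -
  assume h: "dstrip a l \<subseteq> dstrip a' l"
  have "(a, l, 0) \<in> dstrip a' l" using h mem_dstrip_self by blast
  then show ?thesis by (simp add: dstrip_eq)
qed

lemma div_comm: "(x::int) div 2 ^ a div 2 ^ b = x div 2 ^ b div 2 ^ a"
  by (simp add: div_div_pow add.commute)

lemma tree_in_strip:
  assumes ne: "dtree m L n \<inter> dstrip a l \<noteq> {}" and l: "L \<le> l"
  shows "dtree m L n \<subseteq> dstrip a l"
proof -
  obtain m' l' n' where p: "(m', l', n') \<in> dtree m L n" "(m', l', n') \<in> dstrip a l"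
    using ne by auto
  then have "l' \<le> L" "m' div 2 ^ nat (L - l') = m" "m' div 2 ^ nat (l - l') = a"
    unfolding dstrip_eq dtree_eq by auto
  then have a: "a = m div 2 ^ nat (l - L)" using div_chain[of l' L l m'] l by simp
  show ?thesis
  proof
    fix x assume "x \<in> dtree m L n"
    then obtain m'' l'' n'' where x: "x = (m'', l'', n'')" "l'' \<le> L" "m'' div 2 ^ nat (L - l'') = m"
      unfolding dtree_eq by auto
    then show "x \<in> dstrip a l"
      unfolding dstrip_eq using div_chain[of l'' L l m''] l a by auto
  qed
qed

lemma tree_strip_sub:
  assumes ne: "dtree m L n \<inter> dstrip a l \<noteq> {}" and l: "l < L"
  shows "dtree m L n \<inter> dstrip a l \<subseteq> dtree a l (n div 2 ^ nat (L - l))"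
    and "a div 2 ^ nat (L - l) = m"
proof -
  obtain m' l' n' where p: "(m', l', n') \<in> dtree m L n" "(m', l', n') \<in> dstrip a l"
    using ne by auto
  then have "l' \<le> l" "m' div 2 ^ nat (L - l') = m" "m' div 2 ^ nat (l - l') = a"
    unfolding dstrip_eq dtree_eq by auto
  then show am: "a div 2 ^ nat (L - l) = m" using div_chain[of l' l L m'] l by simp
  show "dtree m L n \<inter> dstrip a l \<subseteq> dtree a l (n div 2 ^ nat (L - l))"
  proof
    fix x assume "x \<in> dtree m L n \<inter> dstrip a l"
    then obtain m'' l'' n'' where x: "x = (m'', l'', n'')" "l'' \<le> l" "m'' div 2 ^ nat (l - l'') = a"
        "n'' = n div 2 ^ nat (L - l'')"
      unfolding dtree_eq dstrip_eq by auto
    then show "x \<in> dtree a l (n div 2 ^ nat (L - l))"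
      unfolding dtree_eq using div_chain[of l'' l L n] l div_comm by auto
  qed
qed

lemma dyI_strip:
  assumes "dyI a1 l1 \<inter> dyI a2 l2 \<noteq> {}"
  shows "dstrip a1 l1 \<inter> dstrip a2 l2 \<noteq> {}"
proof -
  obtain x where "x \<in> dyI a1 l1" "x \<in> dyI a2 l2" using assms by blast
  then have x: "di l1 x = a1" "di l2 x = a2" by (auto simp: mem_dyI)
  show ?thesis
  proof (cases "l1 \<le> l2")
    case True
    then have "a2 = a1 div 2 ^ nat (l2 - l1)" using x di_nest[OF True, of x] by simp
    then have "(a1, l1, 0) \<in> dstrip a2 l2" using True unfolding dstrip_eq by simp
    then show ?thesis using mem_dstrip_self[of a1 l1 0] by blast
  next
    case False
    then have F: "l2 \<le> l1" by simp
    then have "a1 = a2 div 2 ^ nat (l1 - l2)" using x di_nest[OF F, of x] by simp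
    then have "(a2, l2, 0) \<in> dstrip a1 l1" using F unfolding dstrip_eq by simp
    then show ?thesis using mem_dstrip_self[of a2 l2 0] by blast
  qed
qed

lemma emeasure_dyI: "emeasure lborel (dyI a l) = ennreal (2 powi l)"
proof -
  have "emeasure lborel (dyI a l) = ennreal (2 powi l * (of_int a + 1) - 2 powi l * of_int a)"
    unfolding dyI_def by (rule emeasure_lborel_Ioc) simp
  then show ?thesis by (simp add: algebra_simps)
qed

lemma DY:
  fixes M :: "(int \<times> int) set"
  assumes sub: "\<And>k. k \<in> M \<Longrightarrow> dyI (fst k) (snd k) \<subseteq> dyI m L"
    and disj: "\<And>k k'. k \<in> M \<Longrightarrow> k' \<in> M \<Longrightarrow> k \<noteq> k' \<Longrightarrow> dyI (fst k) (snd k) \<inter> dyI (fst k') (snd k') = {}"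
  shows "(\<integral>\<^sup>+k. ennreal (2 powi snd k) \<partial>count_space M) \<le> ennreal (2 powi L)"
proof -
  have "(\<integral>\<^sup>+k. ennreal (2 powi snd k) \<partial>count_space M) = (\<integral>\<^sup>+k. emeasure lborel (dyI (fst k) (snd k)) \<partial>count_space M)"
    by (simp add: emeasure_dyI)
  also have "\<dots> = emeasure lborel (\<Union>k\<in>M. dyI (fst k) (snd k))"
  proof (rule emeasure_UN_countable[symmetric])
    show "disjoint_family_on (\<lambda>k. dyI (fst k) (snd k)) M"
      unfolding disjoint_family_on_def using disj by blast
  qed (auto simp: dyI_def intro: countableI_type)
  also have "\<dots> \<le> emeasure lborel (dyI m L)"
    by (rule emeasure_mono) (use sub in \<open>auto simp: dyI_def\<close>)
  also have "\<dots> = ennreal (2 powi L)" by (rule emeasure_dyI)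
  finally show ?thesis .
qed

lemma less_powi: "of_int l < (2::real) powi l"
proof (cases "0 \<le> l")
  case True
  then have "(2::real) powi l = 2 ^ nat l" by (simp add: power_int_def)
  moreover have "real (nat l) < 2 ^ nat l" by (rule of_nat_less_two_power)
  ultimately show ?thesis using True by simp
next
  case False
  then show ?thesis using powi_pos[of l] by linarith
qed

lemma MAX:
  fixes K :: "(int \<times> int) set"
  assumes fin: "costm K \<noteq> top"
  defines "K' \<equiv> {k \<in> K. \<forall>k'\<in>K. dstripK k \<subseteq> dstripK k' \<longrightarrow> k' = k}"
  shows "K' \<subseteq> K" "(\<Union>k\<in>K. dstripK k) \<subseteq> (\<Union>k\<in>K'. dstripK k)"
    "\<And>k k'. k \<in> K' \<Longrightarrow> k' \<in> K' \<Longrightarrow> k \<noteq> k' \<Longrightarrow> dstripK k \<inter> dstripK k' = {}"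
proof -
  show "K' \<subseteq> K" unfolding K'_def by auto
  obtain C where C: "costm K = ennreal C" "0 \<le> C" using fin by (cases "costm K") auto
  have bnd: "snd k \<le> \<lfloor>C\<rfloor>" if "k \<in> K" for k
  proof -
    have "ennreal (2 powi snd k) \<le> costm K" unfolding costm_def by (rule pt_le_int[OF that])
    then have "2 powi snd k \<le> C" using C by simp
    then have "of_int (snd k) < C" using less_powi[of "snd k"] by linarith
    then show ?thesis by linarith
  qed
  have up: "\<exists>k'\<in>K'. dstripK k \<subseteq> dstripK k'" if k: "k \<in> K" for k
  proof -
    define Up where "Up = {k' \<in> K. dstripK k \<subseteq> dstripK k'}"
    have "snd ` Up \<subseteq> {snd k..\<lfloor>C\<rfloor>}"
      unfolding Up_def using bnd strip_scale by fastforce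
    then have finU: "finite (snd ` Up)" by (rule finite_subset) simp
    have kU: "k \<in> Up" unfolding Up_def using k by simp
    define L where "L = Max (snd ` Up)"
    have "L \<in> snd ` Up" unfolding L_def using finU kU by (intro Max_in) auto
    then obtain ks where ks: "ks \<in> Up" "snd ks = L" by auto
    have "ks \<in> K'"
      unfolding K'_def
    proof (intro CollectI conjI ballI impI)
      show "ks \<in> K" using ks Up_def by simp
      fix k' assume k': "k' \<in> K" "dstripK ks \<subseteq> dstripK k'"
      then have "k' \<in> Up" using ks unfolding Up_def by auto
      then have "snd k' \<le> L" unfolding L_def using finU by simp
      moreover have "L \<le> snd k'" using strip_scale[OF k'(2)] ks by simp
      ultimately have "snd k' = snd ks" using ks by simp
      then have "fst k' = fst ks" using strip_same_scale[of "fst ks" "snd ks" "fst k'"] k'(2) by simp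
      then show "k' = ks" using \<open>snd k' = snd ks\<close> by (simp add: prod_eq_iff)
    qed
    then show ?thesis using ks unfolding Up_def by auto
  qed
  then show "(\<Union>k\<in>K. dstripK k) \<subseteq> (\<Union>k\<in>K'. dstripK k)" by blast
  fix k k' assume kk: "k \<in> K'" "k' \<in> K'" "k \<noteq> k'"
  show "dstripK k \<inter> dstripK k' = {}"
  proof (rule ccontr)
    assume ne: "dstripK k \<inter> dstripK k' \<noteq> {}"
    show False
    proof (cases "snd k \<le> snd k'")
      case True
      then have "dstripK k \<subseteq> dstripK k'" using strip_nest[OF ne] by simp
      then show False using kk unfolding K'_def by auto
    next
      case False
      then have "dstripK k' \<subseteq> dstripK k" using strip_nest[of "fst k'" "snd k'" "fst k" "snd k"] ne by auto
      then show False using kk unfolding K'_def by auto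
    qed
  qed
qed


definition LMd :: "real \<Rightarrow> (dpt \<Rightarrow> real) \<Rightarrow> real \<Rightarrow> ennreal" where
  "LMd r H = level_meas UNIV UNIV dnu (dLinf_nu r) H"

definition Phi :: "real \<Rightarrow> real \<Rightarrow> (dpt \<Rightarrow> real) \<Rightarrow> ennreal" where
  "Phi q r H = (\<integral>\<^sup>+t. ennreal (q * t powr (q - 1)) * LMd r H t * indicator {0<..} t \<partial>lborel)"

lemma dLq_alt: "dLq_nu q r H = epow (Phi q r H) (1 / q)"
  unfolding dLq_nu_def Lq_of_dist_def Phi_def LMd_def ..

lemma LMd_meas[measurable]: "LMd r H \<in> borel_measurable borel"
  unfolding LMd_def by (rule antimono_meas) (rule level_antimono)

lemma LMd_meas_lborel[measurable]: "LMd r H \<in> borel_measurable lborel"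
  using LMd_meas by simp

lemma Phi_mono:
  assumes r: "0 < r" and h: "\<And>x. \<bar>H1 x\<bar> \<le> \<bar>H2 x\<bar>"
  shows "Phi q r H1 \<le> Phi q r H2"
  unfolding Phi_def LMd_def
  by (intro nn_integral_mono mult_right_mono mult_left_mono level_mono[OF absmono_dLinf_nu[OF r] h]) auto

lemma Ed_zero: "(\<And>x. x \<in> A \<Longrightarrow> G x = 0) \<Longrightarrow> Ed r G A = 0"
  unfolding Ed_def by (subst nn_integral_0_iff_AE) (auto simp: indicator_def)

lemma Ed_restrict: "(\<And>x. x \<notin> S \<Longrightarrow> G x = 0) \<Longrightarrow> Ed r G A = Ed r G (A \<inter> S)"
  unfolding Ed_def by (intro nn_integral_cong) (auto simp: indicator_def)

lemma Ed_single: "Ed r G {k} = ennreal (\<bar>G k\<bar> powr r)"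
proof -
  have "Ed r G {k} = (\<Sum>x\<in>{k}. ennreal (\<bar>G x\<bar> powr r) * indicator {k} x)"
    unfolding Ed_def by (rule nn_integral_count_space') auto
  then show ?thesis by simp
qed

lemma dLinf_zero: "0 < r \<Longrightarrow> dLinf_nu r (\<lambda>_. 0) = 0"
  unfolding dLinf_alt Ed_def by (simp add: epow_pos_zero) (intro antisym SUP_least; simp)

lemma sum_bound:
  fixes w :: "'a \<Rightarrow> ennreal"
  assumes I: "countable I" and h: "\<And>x. w x \<le> (\<integral>\<^sup>+i. v i x \<partial>count_space I)"
  shows "(\<integral>\<^sup>+x. w x \<partial>count_space UNIV) \<le> (\<integral>\<^sup>+i. (\<integral>\<^sup>+x. v i x \<partial>count_space UNIV) \<partial>count_space I)"
proof -
  have "(\<integral>\<^sup>+x. w x \<partial>count_space UNIV) \<le> (\<integral>\<^sup>+x. (\<integral>\<^sup>+i. v i x \<partial>count_space I) \<partial>count_space UNIV)"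
    by (intro nn_integral_mono h)
  also have "\<dots> = (\<integral>\<^sup>+i. (\<integral>\<^sup>+x. v i x \<partial>count_space UNIV) \<partial>count_space I)"
    by (rule nn_integral_count_space_nn_integral[OF I]) simp
  finally show ?thesis .
qed

lemma count_sub:
  assumes "M \<subseteq> K"
  shows "(\<integral>\<^sup>+k. f k * indicator M k \<partial>count_space K) = (\<integral>\<^sup>+k. f k \<partial>count_space M)"
proof -
  have "(\<integral>\<^sup>+k. f k * indicator M k \<partial>count_space K) = (\<integral>\<^sup>+k. f k * indicator M k * indicator K k \<partial>count_space UNIV)"
    by (rule nn_integral_count_space_indicator) simp
  also have "\<dots> = (\<integral>\<^sup>+k. f k * indicator M k \<partial>count_space UNIV)"
    using assms by (intro nn_integral_cong) (auto simp: indicator_def)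
  also have "\<dots> = (\<integral>\<^sup>+k. f k \<partial>count_space M)"
    by (rule nn_integral_count_space_indicator[symmetric]) simp
  finally show ?thesis .
qed

lemma KL:
  fixes K' :: "(int \<times> int) set" and H :: "dpt \<Rightarrow> real"
  assumes r: "0 < r"
    and disj: "\<And>k k'. k \<in> K' \<Longrightarrow> k' \<in> K' \<Longrightarrow> k \<noteq> k' \<Longrightarrow> dstripK k \<inter> dstripK k' = {}"
    and adm: "\<And>k. k \<in> K' \<Longrightarrow> dLinf_nu r (\<lambda>x. indicator (UNIV - Bc k) x * (indicator (dstripK k) x * H x)) \<le> ennreal t"
  shows "dLinf_nu r (\<lambda>x. indicator (UNIV - (\<Union>k\<in>K'. Bc k)) x * (indicator (\<Union>k\<in>K'. dstripK k) x * H x)) \<le> ennreal t"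
proof -
  define H' where "H' = (\<lambda>x. indicator (UNIV - (\<Union>k\<in>K'. Bc k)) x * (indicator (\<Union>k\<in>K'. dstripK k) x * H x))"
  define Hk where "Hk k = (\<lambda>x. indicator (UNIV - Bc k) x * (indicator (dstripK k) x * H x))" for k
  define c where "c = epow (ennreal t) r"
  have Hk_bound: "Ed r (Hk k) (dtreeK T') \<le> c * ennreal (2 powi fst (snd T'))" if k: "k \<in> K'" for k T'
  proof -
    have "Ed r (Hk k) (dtreeK T') \<le> epow (TS r (Hk k)) r * ennreal (2 powi fst (snd T'))"
      by (rule Ed_tree_le_TS[OF r])
    also have "\<dots> \<le> c * ennreal (2 powi fst (snd T'))"
      unfolding c_def using adm[OF k] D1[OF r, of "Hk k"]
      by (intro mult_right_mono epow_mono r) (auto simp: Hk_def)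
    finally show ?thesis .
  qed
  have Hk_off: "Hk k x = 0" if "x \<notin> dstripK k" for k x using that by (simp add: Hk_def)
  have "TS r H' \<le> ennreal t"
    unfolding TS_def
  proof (rule SUP_least)
    fix k0 :: dpt
    obtain m L n where k0: "k0 = (m, L, n)" by (cases k0) auto
    define T where "T = dtree m L n"
    have sb: "Ed r H' T \<le> (\<integral>\<^sup>+k. Ed r (Hk k) T \<partial>count_space K')"
      unfolding Ed_def
    proof (rule sum_bound)
      fix x
      show "ennreal (\<bar>H' x\<bar> powr r) * indicator T x \<le> (\<integral>\<^sup>+k. ennreal (\<bar>Hk k x\<bar> powr r) * indicator T x \<partial>count_space K')"
      proof (cases "x \<in> (\<Union>k\<in>K'. dstripK k) \<and> x \<notin> (\<Union>k\<in>K'. Bc k)")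
        case True
        then obtain k1 where k1: "k1 \<in> K'" "x \<in> dstripK k1" "x \<notin> Bc k1" by auto
        have "ennreal (\<bar>H' x\<bar> powr r) * indicator T x = ennreal (\<bar>Hk k1 x\<bar> powr r) * indicator T x"
          using True k1 by (simp add: H'_def Hk_def)
        also have "\<dots> \<le> (\<integral>\<^sup>+k. ennreal (\<bar>Hk k x\<bar> powr r) * indicator T x \<partial>count_space K')"
          by (rule pt_le_int[OF k1(1), where w="\<lambda>k. ennreal (\<bar>Hk k x\<bar> powr r) * indicator T x"])
        finally show ?thesis .
      next
        case False
        then have "H' x = 0" by (auto simp: H'_def split: split_indicator)
        then show ?thesis by simp
      qed
    qed (rule countableI_type)
    have "Ed r H' T \<le> c * ennreal (2 powi L)"
    proof (cases "\<exists>k1\<in>K'. L \<le> snd k1 \<and> T \<inter> dstripK k1 \<noteq> {}")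
      case True
      then obtain k1 where k1: "k1 \<in> K'" "L \<le> snd k1" "T \<inter> dstripK k1 \<noteq> {}" by auto
      have Tsub: "T \<subseteq> dstripK k1" using tree_in_strip k1 unfolding T_def by blast
      have z: "Ed r (Hk k) T = 0" if "k \<in> K'" "k \<noteq> k1" for k
      proof (rule Ed_zero)
        fix x assume "x \<in> T"
        then have "x \<notin> dstripK k" using Tsub disj[OF that(1) k1(1) that(2)] by blast
        then show "Hk k x = 0" by (rule Hk_off)
      qed
      have "(\<integral>\<^sup>+k. Ed r (Hk k) T \<partial>count_space K') = (\<Sum>k\<in>{k1}. Ed r (Hk k) T)"
        by (rule nn_integral_count_space') (use z k1 in auto)
      also have "\<dots> = Ed r (Hk k1) T" by simp
      also have "\<dots> \<le> c * ennreal (2 powi L)"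
        using Hk_bound[OF k1(1), of k0] unfolding k0 T_def by simp
      finally show ?thesis using sb by simp
    next
      case False
      define M where "M = {k \<in> K'. T \<inter> dstripK k \<noteq> {}}"
      have each: "Ed r (Hk k) T \<le> c * (ennreal (2 powi snd k) * indicator M k)" if k: "k \<in> K'" for k
      proof (cases "k \<in> M")
        case True
        then have ne: "dtree m L n \<inter> dstripK k \<noteq> {}" and lt: "snd k < L"
          using False k unfolding M_def T_def by auto
        have "Ed r (Hk k) T = Ed r (Hk k) (T \<inter> dstripK k)"
          by (rule Ed_restrict) (rule Hk_off)
        also have "\<dots> \<le> Ed r (Hk k) (dtree (fst k) (snd k) (n div 2 ^ nat (L - snd k)))"
          by (rule Ed_mono) (use tree_strip_sub(1)[OF ne lt] in \<open>simp add: T_def\<close>)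
        also have "\<dots> \<le> c * ennreal (2 powi snd k)"
          using Hk_bound[OF k, of "(fst k, snd k, n div 2 ^ nat (L - snd k))"] by simp
        finally show ?thesis using True by simp
      next
        case False
        then have "Ed r (Hk k) T = 0"
          using k unfolding M_def by (intro Ed_zero Hk_off) auto
        then show ?thesis using False by simp
      qed
      have "(\<integral>\<^sup>+k. Ed r (Hk k) T \<partial>count_space K') \<le> (\<integral>\<^sup>+k. c * (ennreal (2 powi snd k) * indicator M k) \<partial>count_space K')"
        by (intro nn_integral_mono_AE) (auto simp: AE_count_space each)
      also have "\<dots> = c * (\<integral>\<^sup>+k. ennreal (2 powi snd k) * indicator M k \<partial>count_space K')"
        by (rule nn_integral_cmult) simp
      also have "\<dots> = c * (\<integral>\<^sup>+k. ennreal (2 powi snd k) \<partial>count_space M)"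
        by (subst count_sub) (auto simp: M_def)
      finally have I1: "(\<integral>\<^sup>+k. Ed r (Hk k) T \<partial>count_space K') \<le> c * (\<integral>\<^sup>+k. ennreal (2 powi snd k) \<partial>count_space M)" .
      have I2: "(\<integral>\<^sup>+k. ennreal (2 powi snd k) \<partial>count_space M) \<le> ennreal (2 powi L)"
      proof (rule DY)
        fix k assume k: "k \<in> M"
        then have ne: "dtree m L n \<inter> dstripK k \<noteq> {}" and lt: "snd k < L"
          using False unfolding M_def T_def by auto
        show "dyI (fst k) (snd k) \<subseteq> dyI m L"
          using tree_strip_sub(2)[OF ne lt] dyI_sub[of "snd k" L "fst k" m] lt by simp
      next
        fix k k' assume "k \<in> M" "k' \<in> M" "k \<noteq> k'"
        then have "dstripK k \<inter> dstripK k' = {}" using disj unfolding M_def by auto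
        then show "dyI (fst k) (snd k) \<inter> dyI (fst k') (snd k') = {}" using dyI_strip by blast
      qed
      have "Ed r H' T \<le> c * (\<integral>\<^sup>+k. ennreal (2 powi snd k) \<partial>count_space M)" using sb I1 by (rule order_trans)
      also have "\<dots> \<le> c * ennreal (2 powi L)" using I2 by (rule mult_left_mono) simp
      finally show ?thesis .
    qed
    then show "epow (ennreal (2 powi fst (snd k0))) (- 1 / r) * epow (Ed r H' (dtreeK k0)) (1 / r) \<le> ennreal t"
      unfolding k0 T_def c_def by (intro L1[OF r]) simp
  qed
  then show ?thesis using D1[OF r, of H'] by (simp add: H'_def)
qed


lemma SA_pt:
  fixes K' :: "(int \<times> int) set" and H :: "dpt \<Rightarrow> real"
  assumes r: "0 < r"
    and disj: "\<And>k k'. k \<in> K' \<Longrightarrow> k' \<in> K' \<Longrightarrow> k \<noteq> k' \<Longrightarrow> dstripK k \<inter> dstripK k' = {}"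
  shows "LMd r (\<lambda>x. indicator (\<Union>k\<in>K'. dstripK k) x * H x) t
      \<le> (\<integral>\<^sup>+k. LMd r (\<lambda>x. indicator (dstripK k) x * H x) t \<partial>count_space K')"
proof (rule ennreal_le_epsilon)
  fix e :: real assume e: "0 < e"
  define P where "P k B \<longleftrightarrow> dLinf_nu r (\<lambda>x. indicator (UNIV - B) x * (indicator (dstripK k) x * H x)) \<le> ennreal t" for k B
  have ne: "\<exists>B. P k B" for k
    by (rule exI[of _ UNIV]) (simp add: P_def dLinf_zero[OF r])
  have "\<exists>Y. (\<forall>k\<in>K'. P k (Y k)) \<and>
     (\<integral>\<^sup>+k. dnu (Y k) \<partial>count_space K') \<le> (\<integral>\<^sup>+k. (INF B\<in>{B. P k B}. dnu B) \<partial>count_space K') + ennreal e"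
    by (rule choice_eps[OF countableI_type ne e])
  then obtain Bc where Bc: "\<forall>k\<in>K'. P k (Bc k)"
    and s: "(\<integral>\<^sup>+k. dnu (Bc k) \<partial>count_space K') \<le> (\<integral>\<^sup>+k. (INF B\<in>{B. P k B}. dnu B) \<partial>count_space K') + ennreal e"
    by (elim exE conjE)
  have LM: "LMd r (\<lambda>x. indicator (dstripK k) x * H x) t = (INF B\<in>{B. P k B}. dnu B)" for k
    unfolding LMd_def level_meas_def P_def by simp
  have "LMd r (\<lambda>x. indicator (\<Union>k\<in>K'. dstripK k) x * H x) t \<le> dnu (\<Union>k\<in>K'. Bc k)"
    unfolding LMd_def level_meas_def
  proof (rule INF_lower)
    show "(\<Union>k\<in>K'. Bc k) \<in> {B \<in> UNIV. dLinf_nu r (\<lambda>x. indicator (UNIV - B) x * (indicator (\<Union>k\<in>K'. dstripK k) x * H x)) \<le> ennreal t}"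
    proof (intro CollectI conjI UNIV_I)
      show "dLinf_nu r (\<lambda>x. indicator (UNIV - (\<Union>k\<in>K'. Bc k)) x * (indicator (\<Union>k\<in>K'. dstripK k) x * H x)) \<le> ennreal t"
      proof (rule KL[OF r disj])
        fix k assume "k \<in> K'"
        then have "P k (Bc k)" using Bc by blast
        then show "dLinf_nu r (\<lambda>x. indicator (UNIV - Bc k) x * (indicator (dstripK k) x * H x)) \<le> ennreal t"
          unfolding P_def .
      qed
    qed
  qed
  also have "\<dots> \<le> (\<integral>\<^sup>+k. dnu (Bc k) \<partial>count_space K')"
    by (rule dnu_subadd) (rule countableI_type)
  also have "\<dots> \<le> (\<integral>\<^sup>+k. LMd r (\<lambda>x. indicator (dstripK k) x * H x) t \<partial>count_space K') + ennreal e"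
    using s unfolding LM .
  finally show "LMd r (\<lambda>x. indicator (\<Union>k\<in>K'. dstripK k) x * H x) t
      \<le> (\<integral>\<^sup>+k. LMd r (\<lambda>x. indicator (dstripK k) x * H x) t \<partial>count_space K') + ennreal e" .
qed

lemma SA:
  fixes K' :: "(int \<times> int) set" and H :: "dpt \<Rightarrow> real"
  assumes r: "0 < r"
    and disj: "\<And>k k'. k \<in> K' \<Longrightarrow> k' \<in> K' \<Longrightarrow> k \<noteq> k' \<Longrightarrow> dstripK k \<inter> dstripK k' = {}"
  shows "Phi q r (\<lambda>x. indicator (\<Union>k\<in>K'. dstripK k) x * H x)
      \<le> (\<integral>\<^sup>+k. Phi q r (\<lambda>x. indicator (dstripK k) x * H x) \<partial>count_space K')"
proof -
  let ?L = "\<lambda>k t. LMd r (\<lambda>x. indicator (dstripK k) x * H x) t"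
  let ?w = "\<lambda>t. ennreal (q * t powr (q - 1)) * indicator {0<..} t"
  have "Phi q r (\<lambda>x. indicator (\<Union>k\<in>K'. dstripK k) x * H x)
      \<le> (\<integral>\<^sup>+t. ?w t * (\<integral>\<^sup>+k. ?L k t \<partial>count_space K') \<partial>lborel)"
    unfolding Phi_def
  proof (intro nn_integral_mono)
    fix t
    have sp: "LMd r (\<lambda>x. indicator (\<Union>k\<in>K'. dstripK k) x * H x) t \<le> (\<integral>\<^sup>+k. ?L k t \<partial>count_space K')"
      using r disj by (rule SA_pt)
    have "ennreal (q * t powr (q - 1)) * LMd r (\<lambda>x. indicator (\<Union>k\<in>K'. dstripK k) x * H x) t * indicator {0<..} t
        = ?w t * LMd r (\<lambda>x. indicator (\<Union>k\<in>K'. dstripK k) x * H x) t"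
      by (simp only: mult_ac)
    also have "\<dots> \<le> ?w t * (\<integral>\<^sup>+k. ?L k t \<partial>count_space K')"
      by (rule mult_left_mono[OF sp]) (rule zero_le)
    finally show "ennreal (q * t powr (q - 1)) * LMd r (\<lambda>x. indicator (\<Union>k\<in>K'. dstripK k) x * H x) t * indicator {0<..} t
        \<le> ?w t * (\<integral>\<^sup>+k. ?L k t \<partial>count_space K')" .
  qed
  also have "\<dots> = (\<integral>\<^sup>+t. (\<integral>\<^sup>+k. ?w t * ?L k t \<partial>count_space K') \<partial>lborel)"
    by (intro nn_integral_cong nn_integral_cmult[symmetric]) simp
  also have "\<dots> = (\<integral>\<^sup>+k. (\<integral>\<^sup>+t. ?w t * ?L k t \<partial>lborel) \<partial>count_space K')"
    by (rule nn_integral_count_space_nn_integral) (auto intro: countableI_type)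
  also have "\<dots> = (\<integral>\<^sup>+k. Phi q r (\<lambda>x. indicator (dstripK k) x * H x) \<partial>count_space K')"
    unfolding Phi_def by (intro nn_integral_cong) (simp only: mult_ac)
  finally show ?thesis .
qed

lemma epow_eq_zero: "0 < a \<Longrightarrow> epow x a = 0 \<Longrightarrow> x = 0"
  by (cases x rule: ennreal_pos_cases) (auto simp: epow_pos_top epow_real)

lemma Phi_zero:
  assumes r: "0 < r"
  shows "Phi q r (\<lambda>_. 0) = 0"
proof -
  have "LMd r (\<lambda>_. 0) t = 0" for t
  proof -
    have "LMd r (\<lambda>_. 0) t \<le> dnu {}"
      unfolding LMd_def level_meas_def by (rule INF_lower) (simp add: dLinf_zero[OF r])
    then show ?thesis by (simp add: dnu_empty)
  qed
  then show ?thesis unfolding Phi_def by simp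
qed

definition SS :: "real \<Rightarrow> real \<Rightarrow> (dpt \<Rightarrow> real) \<Rightarrow> ennreal" where
  "SS q r G = (SUP k\<in>UNIV. epow (ennreal (2 powi snd k)) (- 1 / q) * dLq_nu q r (\<lambda>x. indicator (dstripK k) x * G x))"

lemma strip_le_SS:
  assumes q: "0 < q"
  shows "Phi q r (\<lambda>x. indicator (dstripK k) x * G x) \<le> epow (SS q r G) q * ennreal (2 powi snd k)"
proof (rule L2[OF q])
  show "epow (ennreal (2 powi snd k)) (- 1 / q) * epow (Phi q r (\<lambda>x. indicator (dstripK k) x * G x)) (1 / q) \<le> SS q r G"
    unfolding SS_def dLq_alt[symmetric] by (rule SUP_upper) simp
qed auto

lemma POS:
  assumes q: "0 < q" and r: "0 < r" and S0: "SS q r G = 0"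
  shows "G k0 = 0"
proof (rule ccontr)
  assume Gk: "G k0 \<noteq> 0"
  obtain m' l' n' where k0: "k0 = (m', l', n')" by (cases k0) auto
  define H where "H = (\<lambda>x. indicator (dstrip m' l') x * G x)"
  have "epow (ennreal (2 powi l')) (- 1 / q) * dLq_nu q r H \<le> SS q r G"
    unfolding SS_def H_def by (rule SUP_upper2[of "(m', l')"]) auto
  then have z: "epow (ennreal (2 powi l')) (- 1 / q) * dLq_nu q r H = 0" using S0 by (simp only: le_zero_eq)
  have "epow (ennreal (2 powi l')) (- 1 / q) = ennreal ((2 powi l') powr (- 1 / q))"
    by (rule epow_real) (rule powi_pos)
  moreover have "0 < ((2::real) powi l') powr (- 1 / q)" by (simp only: powr_gt_zero) simp
  ultimately have nz: "epow (ennreal (2 powi l')) (- 1 / q) \<noteq> 0" by (simp only: ennreal_eq_0_iff not_le)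
  have "dLq_nu q r H = 0" using z nz mult_eq_0_iff[of "epow (ennreal (2 powi l')) (- 1 / q)" "dLq_nu q r H"]
    by blast
  then have Phi0: "Phi q r H = 0" unfolding dLq_alt
    by (rule epow_eq_zero[rotated]) (use q in simp)
  define g where "g = \<bar>G k0\<bar> powr r"
  have gp: "0 < g" unfolding g_def using Gk by simp
  define tau where "tau = (g / 2 powi l') powr (1 / r)"
  have taup: "0 < tau" unfolding tau_def using gp by simp
  have key: "ennreal (2 powi l') \<le> LMd r H t" if t: "0 < t" "t < tau" for t
    unfolding LMd_def level_meas_def
  proof (rule INF_greatest)
    fix B assume "B \<in> {B \<in> UNIV. dLinf_nu r (\<lambda>x. indicator (UNIV - B) x * H x) \<le> ennreal t}"
    then have adm: "dLinf_nu r (\<lambda>x. indicator (UNIV - B) x * H x) \<le> ennreal t" by simp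
    show "ennreal (2 powi l') \<le> dnu B"
    proof (cases "k0 \<in> B")
      case True then show ?thesis unfolding k0 by (rule dnu_ge)
    next
      case False
      define H' where "H' = (\<lambda>x. indicator (UNIV - B) x * H x)"
      have "epow (dnu {k0}) (- 1 / r) * epow (Ed r H' {k0}) (1 / r) \<le> dLinf_nu r H'"
        unfolding dLinf_alt by (rule SUP_upper) simp
      then have "epow (dnu {k0}) (- 1 / r) * epow (Ed r H' {k0}) (1 / r) \<le> ennreal t"
        using adm unfolding H'_def by simp
      then have "Ed r H' {k0} \<le> epow (ennreal t) r * dnu {k0}"
        by (intro L2[OF r]) (auto simp: k0 dnu_single)
      moreover have "Ed r H' {k0} = ennreal g"
        unfolding Ed_single g_def H'_def H_def using False by (simp add: k0 mem_dstrip_self)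
      moreover have "epow (ennreal t) r * dnu {k0} = ennreal (t powr r * 2 powi l')"
        using t by (simp add: k0 dnu_single epow_real ennreal_mult'[symmetric])
      ultimately have le: "g \<le> t powr r * 2 powi l'" using gp by simp
      have "t powr r < tau powr r" using t r by (simp add: powr_less_mono2)
      also have "tau powr r = g / 2 powi l'" unfolding tau_def using gp r by (simp add: powr_powr)
      finally have "t powr r * 2 powi l' < g" by (simp add: field_simps)
      then show ?thesis using le by simp
    qed
  qed
  define f where "f t = ennreal (q * t powr (q - 1)) * ennreal (2 powi l') * indicator {0<..<tau} t" for t
  have fm: "f \<in> borel_measurable lborel" unfolding f_def by measurable
  have "(\<integral>\<^sup>+t. f t \<partial>lborel) \<le> Phi q r H"
    unfolding Phi_def f_def
  proof (intro nn_integral_mono)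
    fix t
    show "ennreal (q * t powr (q - 1)) * ennreal (2 powi l') * indicator {0<..<tau} t
        \<le> ennreal (q * t powr (q - 1)) * LMd r H t * indicator {0<..} t"
    proof (cases "0 < t \<and> t < tau")
      case True then show ?thesis using key[of t] by (auto intro: mult_left_mono)
    qed auto
  qed
  then have "(\<integral>\<^sup>+t. f t \<partial>lborel) = 0" using Phi0 by simp
  then have "AE t in lborel. f t = 0" using fm by (simp add: nn_integral_0_iff_AE)
  then obtain N where N: "{t \<in> space lborel. \<not> f t = 0} \<subseteq> N" "N \<in> null_sets lborel"
    by (rule AE_E) (blast intro: null_setsI)
  have "{0<..<tau} \<subseteq> {t \<in> space lborel. \<not> f t = 0}"
    unfolding f_def using q by (auto simp: ennreal_mult'[symmetric])
  then have "emeasure lborel {0<..<tau} \<le> emeasure lborel N"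
    using N by (intro emeasure_mono) auto
  moreover have "emeasure lborel N = 0" using N(2) by auto
  ultimately show False using taup by simp
qed

lemma costm_mono: "K' \<subseteq> K \<Longrightarrow> costm K' \<le> costm K"
  unfolding costm_def
  by (subst (1 2) nn_integral_count_space_indicator) (auto intro!: nn_integral_mono simp: indicator_def)

lemma D2:
  assumes q: "0 < q" and r: "0 < r"
  shows "dLinf_mu q r G = SS q r G"
proof (rule antisym)
  show "SS q r G \<le> dLinf_mu q r G"
    unfolding SS_def dLinf_mu_def sup_size_def
  proof (rule SUP_least)
    fix k :: "int \<times> int"
    have "epow (dmu (dstripK k)) (- 1 / q) * dLq_nu q r (\<lambda>x. indicator (dstripK k) x * G x)
        \<le> (SUP A\<in>{A. A \<noteq> {}}. epow (dmu A) (- 1 / q) * dLq_nu q r (\<lambda>x. indicator A x * G x))"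
      by (rule SUP_upper) (use mem_dstrip_self in blast)
    then show "epow (ennreal (2 powi snd k)) (- 1 / q) * dLq_nu q r (\<lambda>x. indicator (dstripK k) x * G x)
        \<le> (SUP A\<in>{A. A \<noteq> {}}. epow (dmu A) (- 1 / q) * dLq_nu q r (\<lambda>x. indicator A x * G x))"
      by (simp add: dmu_strip)
  qed
next
  show "dLinf_mu q r G \<le> SS q r G"
    unfolding dLinf_mu_def sup_size_def
  proof (rule SUP_least)
    fix A :: "dpt set" assume "A \<in> {A. A \<noteq> {}}"
    then have A: "A \<noteq> {}" by simp
    show "epow (dmu A) (- 1 / q) * dLq_nu q r (\<lambda>x. indicator A x * G x) \<le> SS q r G"
      unfolding dLq_alt
    proof (rule L1[OF q])
      show "Phi q r (\<lambda>x. indicator A x * G x) \<le> epow (SS q r G) q * dmu A"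
      proof (cases "SS q r G" rule: ennreal_pos_cases)
        case 1
        then have "G = (\<lambda>_. 0)" using POS[OF q r] by auto
        then show ?thesis using Phi_zero[OF r] by simp
      next
        case 2
        then show ?thesis using dmu_pos[OF A] q by (simp add: epow_pos_top ennreal_mult_eq_top_iff)
      next
        case (3 S')
        define c where "c = epow (SS q r G) q"
        have cS: "c = ennreal (S' powr q)" unfolding c_def using 3 by (simp add: epow_real)
        have c_top: "c \<noteq> top" and c0: "c \<noteq> 0" using cS 3 by auto
        let ?U = "\<lambda>K. (\<Union>k\<in>K. dstripK k)"
        have "Phi q r (\<lambda>x. indicator A x * G x) \<le> c * (INF K\<in>{K. A \<subseteq> ?U K}. costm K)"
        proof (rule le_mult_INF[OF c_top])
          have "x \<in> ?U UNIV" for x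
          proof -
            obtain a b d where "x = (a, b, d)" by (cases x) auto
            then show ?thesis using mem_dstrip_self[of a b d] by (auto intro!: bexI[of _ "(a, b)"])
          qed
          then show "{K. A \<subseteq> ?U K} \<noteq> {}" by blast
        next
          fix K assume "K \<in> {K. A \<subseteq> ?U K}"
          then have K: "A \<subseteq> ?U K" by simp
          show "Phi q r (\<lambda>x. indicator A x * G x) \<le> c * costm K"
          proof (cases "costm K = top")
            case True then show ?thesis using c0 by (simp add: ennreal_mult_eq_top_iff)
          next
            case False
            define K' where "K' = {k \<in> K. \<forall>k'\<in>K. dstripK k \<subseteq> dstripK k' \<longrightarrow> k' = k}"
            note mx = MAX[OF False, folded K'_def]
            have "Phi q r (\<lambda>x. indicator A x * G x) \<le> Phi q r (\<lambda>x. indicator (?U K') x * G x)"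
              by (rule Phi_mono[OF r]) (use K mx(2) in \<open>auto simp: indicator_def\<close>)
            also have "\<dots> \<le> (\<integral>\<^sup>+k. Phi q r (\<lambda>x. indicator (dstripK k) x * G x) \<partial>count_space K')"
              by (rule SA[OF r mx(3)])
            also have "\<dots> \<le> (\<integral>\<^sup>+k. c * ennreal (2 powi snd k) \<partial>count_space K')"
              unfolding c_def by (intro nn_integral_mono strip_le_SS[OF q])
            also have "\<dots> = c * costm K'"
              unfolding costm_def by (rule nn_integral_cmult) simp
            also have "\<dots> \<le> c * costm K"
              by (intro mult_left_mono costm_mono mx(1)) simp
            finally show ?thesis .
          qed
        qed
        then show ?thesis unfolding dmu_alt c_def .
      qed
    qed
  qed
qed


lemma T3:
  assumes g: "good r g" and r: "0 < r" and q: "0 < q"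
  shows "Linf_mu q r g = dLinf_mu q r (Fdisc g r)"
proof -
  have "Linf_mu q r g = (SUP k\<in>UNIV. epow (mu (preim (dstripK k))) (- 1 / q)
          * Lq_nu q r (\<lambda>x. indicator (preim (dstripK k)) x * g x))"
    unfolding Linf_mu_def sup_size_def Strips_def strip_preim
    by (simp add: image_image case_prod_beta')
  also have "\<dots> = (SUP k\<in>UNIV. epow (ennreal (2 powi snd k)) (- 1 / q)
          * dLq_nu q r (\<lambda>x. indicator (dstripK k) x * Fdisc g r x))"
  proof (rule SUP_cong[OF refl])
    fix k :: "int \<times> int"
    have "Lq_nu q r (\<lambda>x. indicator (preim (dstripK k)) x * g x)
        = dLq_nu q r (Fdisc (\<lambda>x. indicator (preim (dstripK k)) x * g x) r)"
      by (rule T2[OF good_ind[OF g preim_meas] r q])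
    also have "\<dots> = dLq_nu q r (\<lambda>x. indicator (dstripK k) x * Fdisc g r x)"
      by (simp add: Fdisc_ind[OF g r])
    finally show "epow (mu (preim (dstripK k))) (- 1 / q) * Lq_nu q r (\<lambda>x. indicator (preim (dstripK k)) x * g x)
        = epow (ennreal (2 powi snd k)) (- 1 / q) * dLq_nu q r (\<lambda>x. indicator (dstripK k) x * Fdisc g r x)"
      by (simp add: mu_preim dmu_strip)
  qed
  also have "\<dots> = dLinf_mu q r (Fdisc g r)"
    unfolding SS_def[symmetric] by (rule D2[OF q r, symmetric])
  finally show ?thesis .
qed

lemma T4:
  assumes g: "good r g" and r: "0 < r" and q: "0 < q" and p: "0 < p"
  shows "Lp_mu p q r g = dLp_mu p q r (Fdisc g r)"
proof -
  have "level_meas Xsp Bmeas mu (Linf_mu q r) g lam = level_meas UNIV UNIV dmu (dLinf_mu q r) (Fdisc g r) lam" for lam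
  proof (rule LT)
    show "mu B = dmu (idx ` B)" if "B \<subseteq> Xsp" for B using mu_eq[OF that] .
    show "absmono (Linf_mu q r)" by (rule absmono_Linf_mu[OF q r])
    fix S
    have "good r (\<lambda>x. indicator (preim (- S)) x * g x)" by (rule good_ind[OF g preim_meas])
    then show "Linf_mu q r (\<lambda>x. indicator (preim (- S)) x * g x)
        = dLinf_mu q r (\<lambda>k. indicator (- S) k * Fdisc g r k)"
      using T3[OF _ r q] Fdisc_ind[OF g r] by simp
  qed
  then have "level_meas Xsp Bmeas mu (Linf_mu q r) g = level_meas UNIV UNIV dmu (dLinf_mu q r) (Fdisc g r)"
    by (intro ext)
  then show ?thesis unfolding Lp_mu_def dLp_mu_def by simp
qed

lemma f_good:
  fixes r :: real and f :: "pt \<Rightarrow> real" and J :: nat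
  assumes "f \<in> borel_measurable lebesgue"
    and loc: "\<forall>K. compact K \<and> K \<subseteq> Xsp \<longrightarrow>
           (\<integral>\<^sup>+ x. ennreal (\<bar>f x\<bar> powr r) * indicator K x \<partial>lebesgue) < \<infinity>"
    and supp: "\<forall>x. x \<notin> XJ J \<longrightarrow> f x = 0"
  shows "good r f"
proof -
  define a :: real where "a = 2 ^ J * real J"
  define K :: "pt set" where "K = {- a .. a} \<times> {(2::real) powi (- int J) .. 2 ^ J} \<times> {- a .. a}"
  have XK: "XJ J \<subseteq> K" unfolding XJ_def K_def a_def by auto
  have KX: "K \<subseteq> Xsp"
  proof
    fix x assume "x \<in> K"
    then have "(2::real) powi (- int J) \<le> fst (snd x)" unfolding K_def by auto
    moreover have "(0::real) < 2 powi (- int J)" by (rule powi_pos)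
    ultimately show "x \<in> Xsp" unfolding mem_Xsp by linarith
  qed
  have cK: "compact K" unfolding K_def by (intro compact_Times compact_Icc)
  have XJX: "XJ J \<subseteq> Xsp" using XK KX by blast
  have "(\<integral>\<^sup>+x. ennreal (\<bar>f x\<bar> powr r) \<partial>lebesgue) = (\<integral>\<^sup>+ x. ennreal (\<bar>f x\<bar> powr r) * indicator K x \<partial>lebesgue)"
  proof (intro nn_integral_cong)
    fix x
    show "ennreal (\<bar>f x\<bar> powr r) = ennreal (\<bar>f x\<bar> powr r) * indicator K x"
    proof (cases "x \<in> K")
      case False
      then have "f x = 0" using supp XK by blast
      then show ?thesis by simp
    qed simp
  qed
  also have "\<dots> < \<infinity>" using loc cK KX by blast
  finally show ?thesis unfolding good_def using assms XJX by blast
qed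

theorem lemma5p6:
  fixes p q r :: real and f :: "pt \<Rightarrow> real" and J :: nat
  assumes "p > 0" and "q > 0" and "r > 0"
    and "f \<in> borel_measurable lebesgue"
    and "\<forall>K. compact K \<and> K \<subseteq> Xsp \<longrightarrow>
           (\<integral>\<^sup>+ x. ennreal (\<bar>f x\<bar> powr r) * indicator K x \<partial>lebesgue) < \<infinity>"
    and "\<forall>x. x \<notin> XJ J \<longrightarrow> f x = 0"
  shows "Lq_nu q r f = dLq_nu q r (Fdisc f r) \<and> Lp_mu p q r f = dLp_mu p q r (Fdisc f r)"
proof -
  have g: "good r f" by (rule f_good[OF assms(4-6)])
  show ?thesis using T2[OF g assms(3,2)] T4[OF g assms(3,2,1)] by simp
qed


end
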